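(* Let $T^\sigma=(T,\sigma)$ be a signed tree, where $T$ is not a path, such that every special exterior major vertex $t_k$ of $T^\sigma$ satisfies $\mathrm{ter}(t_k)\neq 2$. Then $\dim(T^\sigma)=\dim(T)-|\eta(T^\sigma)|$, i.e. $\mathrm{mdd}(T^\sigma)=|\eta(T^\sigma)|$.
   Context: A signed graph $\Sigma=(G,\sigma)$ consists of a finite simple connected graph $G=(V,E)$ and a signature $\sigma:E\to\{+1,-1\}$. In a signed tree every pair of vertices $u,v$ is joined by a unique path $P(u,v)$, and the signed distance is $d_\Sigma(u,v)=\sigma(P(u,v))\,d(u,v)$, where $d$ is the usual distance and $\sigma(P)$ is the product of edge signs of $P$. For an ordered subset $W=(w_1,\dots,w_k)$ of vertices, $r_\Sigma(v|W)=(d_\Sigma(v,w_1),\dots,d_\Sigma(v,w_k))$; $W$ is a resolving set if distinct vertices have distinct representations; $\dim(T^\sigma)$ is the minimum size of a resolving set, and $\dim(T)$ is defined analogously for the unsigned tree using $d$. The metric dimensional difference is $\mathrm{mdd}(T^\sigma)=\dim(T)-\dim(T^\sigma)$. Tree terminology: a leaf is a vertex of degree $1$; a major vertex is a vertex of degree at least $3$; a leaf $u$ is a terminal vertex of a major vertex $v$ if $d(u,v)<d(u,w)$ for every other major vertex $w$; the terminal degree $\mathrm{ter}(v)$ is the number of terminal vertices of $v$; an exterior major vertex is a major vertex with positive terminal degree. A leg of an exterior major vertex $t_k$ is the path from $t_k$ to one of its terminal vertices; $L_{k,j}$ is the set of vertices (other than $t_k$) on the $j$-th leg of $t_k$, and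 a vertex $u\in L_{k,j}$ has index $i$ if $d(t_k,u)=i$. An exterior major vertex $t_k$ is special if there are two distinct legs $L_{k,n}$, $L_{k,m}$ of $t_k$ such that for every index $i$, whenever $u_i\in L_{k,n}$ and $v_i\in L_{k,m}$ both have index $i$, one has $d_\Sigma(t_k,u_i)\neq d_\Sigma(t_k,v_i)$ (i.e. the paths from $t_k$ to $u_i$ and to $v_i$ have opposite signs). $\eta(T^\sigma)$ denotes the set of special exterior major vertices. *)

theory Defs
  imports Main
begin

definition simple_graph :: "'a set \<Rightarrow> 'a set set \<Rightarrow> bool" where
  "simple_graph V E \<longleftrightarrow> finite V \<and>
     (\<forall>e\<in>E. \<exists>u v. e = {u, v} \<and> u \<noteq> v \<and> u \<in> V \<and> v \<in> V)"

definition is_gpath :: "'a set \<Rightarrow> 'a set set \<Rightarrow> 'a list \<Rightarrow> 'a \<Rightarrow> 'a \<Rightarrow> bool" where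
  "is_gpath V E xs u v \<longleftrightarrow> xs \<noteq> [] \<and> hd xs = u \<and> last xs = v \<and> distinct xs \<and>
     set xs \<subseteq> V \<and> (\<forall>i. Suc i < length xs \<longrightarrow> {xs ! i, xs ! Suc i} \<in> E)"

definition tree :: "'a set \<Rightarrow> 'a set set \<Rightarrow> bool" where
  "tree V E \<longleftrightarrow> simple_graph V E \<and> V \<noteq> {} \<and>
     (\<forall>u\<in>V. \<forall>v\<in>V. \<exists>!xs. is_gpath V E xs u v)"

definition is_path_graph :: "'a set \<Rightarrow> 'a set set \<Rightarrow> bool" where
  "is_path_graph V E \<longleftrightarrow> (\<exists>xs. distinct xs \<and> set xs = V \<and>
     E = {{xs ! i, xs ! Suc i} | i. Suc i < length xs})"

definition tpath :: "'a set \<Rightarrow> 'a set set \<Rightarrow> 'a \<Rightarrow> 'a \<Rightarrow> 'a list" where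
  "tpath V E u v = (THE xs. is_gpath V E xs u v)"

definition tdist :: "'a set \<Rightarrow> 'a set set \<Rightarrow> 'a \<Rightarrow> 'a \<Rightarrow> nat" where
  "tdist V E u v = length (tpath V E u v) - 1"

definition signature :: "'a set set \<Rightarrow> ('a set \<Rightarrow> int) \<Rightarrow> bool" where
  "signature E \<sigma> \<longleftrightarrow> (\<forall>e\<in>E. \<sigma> e = 1 \<or> \<sigma> e = -1)"

definition path_sign :: "('a set \<Rightarrow> int) \<Rightarrow> 'a list \<Rightarrow> int" where
  "path_sign \<sigma> xs = prod_list (map (\<lambda>i. \<sigma> {xs ! i, xs ! Suc i}) [0..<length xs - 1])"

definition sdist :: "'a set \<Rightarrow> 'a set set \<Rightarrow> ('a set \<Rightarrow> int) \<Rightarrow> 'a \<Rightarrow> 'a \<Rightarrow> int" where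
  "sdist V E \<sigma> u v = path_sign \<sigma> (tpath V E u v) * int (tdist V E u v)"

text \<open>Resolving sets and metric dimension w.r.t. a distance function d.
  Representations r(v|W) of distinct vertices differ iff they differ at some w in W.\<close>
definition resolving :: "'a set \<Rightarrow> ('a \<Rightarrow> 'a \<Rightarrow> int) \<Rightarrow> 'a set \<Rightarrow> bool" where
  "resolving V d W \<longleftrightarrow> W \<subseteq> V \<and>
     (\<forall>u\<in>V. \<forall>v\<in>V. u \<noteq> v \<longrightarrow> (\<exists>w\<in>W. d u w \<noteq> d v w))"

definition metric_dim :: "'a set \<Rightarrow> ('a \<Rightarrow> 'a \<Rightarrow> int) \<Rightarrow> nat" where
  "metric_dim V d = Min {card W | W. resolving V d W}"

definition dim_tree :: "'a set \<Rightarrow> 'a set set \<Rightarrow> nat" where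
  "dim_tree V E = metric_dim V (\<lambda>u v. int (tdist V E u v))"

definition dim_signed :: "'a set \<Rightarrow> 'a set set \<Rightarrow> ('a set \<Rightarrow> int) \<Rightarrow> nat" where
  "dim_signed V E \<sigma> = metric_dim V (sdist V E \<sigma>)"

definition degree :: "'a set \<Rightarrow> 'a set set \<Rightarrow> 'a \<Rightarrow> nat" where
  "degree V E v = card {u \<in> V. {u, v} \<in> E}"

definition leaf :: "'a set \<Rightarrow> 'a set set \<Rightarrow> 'a \<Rightarrow> bool" where
  "leaf V E v \<longleftrightarrow> v \<in> V \<and> degree V E v = 1"

definition major :: "'a set \<Rightarrow> 'a set set \<Rightarrow> 'a \<Rightarrow> bool" where
  "major V E v \<longleftrightarrow> v \<in> V \<and> degree V E v \<ge> 3"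

definition terminal_of :: "'a set \<Rightarrow> 'a set set \<Rightarrow> 'a \<Rightarrow> 'a \<Rightarrow> bool" where
  "terminal_of V E u v \<longleftrightarrow> leaf V E u \<and> major V E v \<and>
     (\<forall>w. major V E w \<and> w \<noteq> v \<longrightarrow> tdist V E u v < tdist V E u w)"

definition ter :: "'a set \<Rightarrow> 'a set set \<Rightarrow> 'a \<Rightarrow> nat" where
  "ter V E v = card {u \<in> V. terminal_of V E u v}"

definition exterior_major :: "'a set \<Rightarrow> 'a set set \<Rightarrow> 'a \<Rightarrow> bool" where
  "exterior_major V E v \<longleftrightarrow> major V E v \<and> ter V E v > 0"

definition leg :: "'a set \<Rightarrow> 'a set set \<Rightarrow> 'a \<Rightarrow> 'a \<Rightarrow> 'a set" where
  "leg V E t u = set (tpath V E t u) - {t}"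

definition special :: "'a set \<Rightarrow> 'a set set \<Rightarrow> ('a set \<Rightarrow> int) \<Rightarrow> 'a \<Rightarrow> bool" where
  "special V E \<sigma> t \<longleftrightarrow> exterior_major V E t \<and>
     (\<exists>n m. n \<noteq> m \<and> terminal_of V E n t \<and> terminal_of V E m t \<and>
        (\<forall>i x y. x \<in> leg V E t n \<and> y \<in> leg V E t m \<and>
            tdist V E t x = i \<and> tdist V E t y = i \<longrightarrow> sdist V E \<sigma> t x \<noteq> sdist V E \<sigma> t y))"

definition eta :: "'a set \<Rightarrow> 'a set set \<Rightarrow> ('a set \<Rightarrow> int) \<Rightarrow> 'a set" where
  "eta V E \<sigma> = {t \<in> V. special V E \<sigma> t}"

end

theory Submission imports Defs begin

lemma is_gpath_alt: "is_gpath V E xs u v \<longleftrightarrow> xs \<noteq> [] \<and> hd xs = u \<and> last xs = v \<and> distinct xs \<and>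
     set xs \<subseteq> V \<and> successively (\<lambda>a b. {a,b} \<in> E) xs"
  by (simp add: is_gpath_def successively_conv_nth)

definition walk :: "'a set \<Rightarrow> 'a set set \<Rightarrow> 'a list \<Rightarrow> bool" where
  "walk V E xs \<longleftrightarrow> xs \<noteq> [] \<and> set xs \<subseteq> V \<and> successively (\<lambda>a b. {a,b} \<in> E) xs"

lemma walk_to_path:
  assumes "walk V E xs"
  shows "\<exists>ys. is_gpath V E ys (hd xs) (last xs) \<and> length ys \<le> length xs \<and> set ys \<subseteq> set xs"
  using assms
proof (induction "length xs" arbitrary: xs rule: less_induct)
  case less
  show ?case
  proof (cases "distinct xs")
    case True
    then show ?thesis using less.prems by (auto simp: walk_def is_gpath_alt)
  next
    case False
    then obtain as a bs cs where xs: "xs = as @ [a] @ bs @ [a] @ cs"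
      using not_distinct_decomp by blast
    let ?ys = "as @ [a] @ cs"
    have w: "walk V E ?ys" using less.prems unfolding xs walk_def
      by (auto simp: successively_append_iff successively_Cons)
    have "length ?ys < length xs" using xs by simp
    from less.hyps[OF this w] obtain zs where
      "is_gpath V E zs (hd ?ys) (last ?ys)" "length zs \<le> length ?ys" "set zs \<subseteq> set ?ys" by blast
    moreover have "hd ?ys = hd xs" by (simp add: xs hd_append)
    moreover have "last ?ys = last xs" by (simp add: xs last_append)
    ultimately show ?thesis using xs by force
  qed
qed

lemma finite_argmax:
  assumes "finite A" "x \<in> A"
  shows "\<exists>z\<in>A. \<forall>y\<in>A. (f y :: nat) \<le> f z"
proof -
  have "Max (f ` A) \<in> f ` A" using assms by (intro Max_in) auto
  then obtain z where "z \<in> A" "f z = Max (f ` A)" by auto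
  moreover have "\<forall>y\<in>A. f y \<le> Max (f ` A)" using assms(1) by simp
  ultimately show ?thesis by metis
qed

lemma finite_argmin:
  assumes "finite A" "x \<in> A"
  shows "\<exists>z\<in>A. \<forall>y\<in>A. (f z :: nat) \<le> f y"
proof -
  have "Min (f ` A) \<in> f ` A" using assms by (intro Min_in) auto
  then obtain z where "z \<in> A" "f z = Min (f ` A)" by auto
  moreover have "\<forall>y\<in>A. Min (f ` A) \<le> f y" using assms(1) by simp
  ultimately show ?thesis by metis
qed

lemma ps_Nil: "path_sign \<sigma> [] = 1" by (simp add: path_sign_def)
lemma ps_single: "path_sign \<sigma> [a] = 1" by (simp add: path_sign_def)
lemma ps_Cons2: "path_sign \<sigma> (a # b # xs) = \<sigma> {a,b} * path_sign \<sigma> (b # xs)"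
proof -
  have "[0..<length (a # b # xs) - 1] = 0 # map Suc [0..<length xs]"
    by (simp add: upt_conv_Cons map_Suc_upt del: upt_Suc)
  moreover have "[0..<length (b # xs) - 1] = [0..<length xs]" by simp
  ultimately show ?thesis unfolding path_sign_def by (simp add: comp_def)
qed

lemma ps_append:
  "xs \<noteq> [] \<Longrightarrow> ys \<noteq> [] \<Longrightarrow>
   path_sign \<sigma> (xs @ ys) = path_sign \<sigma> xs * \<sigma> {last xs, hd ys} * path_sign \<sigma> ys"
proof (induction xs rule: induct_list012)
  case 1 then show ?case by simp
next
  case (2 a) then show ?case by (cases ys) (auto simp: ps_Cons2 ps_single)
next
  case (3 a b xs) then show ?case by (simp add: ps_Cons2)
qed

lemma ps_rev: "path_sign \<sigma> (rev xs) = path_sign \<sigma> xs"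
proof (induction xs)
  case Nil then show ?case by simp
next
  case (Cons a xs)
  show ?case
  proof (cases xs)
    case Nil then show ?thesis by simp
  next
    case (Cons b ys)
    have "path_sign \<sigma> (rev (a # xs)) = path_sign \<sigma> (rev xs @ [a])" by simp
    also have "\<dots> = path_sign \<sigma> (rev xs) * \<sigma> {last (rev xs), a} * path_sign \<sigma> [a]"
      using ps_append[of "rev xs" "[a]" \<sigma>] Cons by simp
    also have "\<dots> = path_sign \<sigma> xs * \<sigma> {b, a}" using Cons.IH Cons by (simp add: ps_single last_rev)
    also have "\<dots> = path_sign \<sigma> (a # xs)" using Cons by (simp add: ps_Cons2 insert_commute)
    finally show ?thesis .
  qed
qed

lemma ps_split:
  assumes "xs \<noteq> []" "ys \<noteq> []" "last xs = hd ys"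
  shows "path_sign \<sigma> (xs @ tl ys) = path_sign \<sigma> xs * path_sign \<sigma> ys"
proof (cases "tl ys")
  case Nil
  then have "ys = [hd ys]" using assms(2) by (metis list.collapse)
  then show ?thesis using Nil by (metis append_Nil2 mult.right_neutral ps_single)
next
  case (Cons c t)
  have ys: "ys = hd ys # c # t" using assms(2) Cons by (metis list.collapse)
  have "path_sign \<sigma> (xs @ tl ys) = path_sign \<sigma> xs * \<sigma> {last xs, c} * path_sign \<sigma> (c # t)"
    using ps_append[OF assms(1), of "c # t"] Cons by simp
  also have "\<dots> = path_sign \<sigma> xs * path_sign \<sigma> ys" using assms(3) ys
    by (metis mult.assoc ps_Cons2)
  finally show ?thesis .
qed

lemma ps_unit:
  assumes "signature E \<sigma>" "set xs \<subseteq> \<Union>E \<or> True" "successively (\<lambda>a b. {a,b} \<in> E) xs"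
  shows "path_sign \<sigma> xs = 1 \<or> path_sign \<sigma> xs = -1"
  using assms(3)
proof (induction xs rule: induct_list012)
  case 1 then show ?case by (simp add: ps_Nil)
next
  case (2 a) then show ?case by (simp add: ps_single)
next
  case (3 a b xs)
  have "\<sigma> {a,b} = 1 \<or> \<sigma> {a,b} = -1" using 3(3) assms(1) by (simp add: signature_def)
  then show ?case using 3 by (auto simp: ps_Cons2)
qed

locale tr =
  fixes V :: "'a set" and E :: "'a set set"
  assumes tr: "tree V E"
begin

abbreviation "P u v \<equiv> tpath V E u v"
abbreviation "d u v \<equiv> tdist V E u v"
abbreviation "adj u v \<equiv> {u,v} \<in> E"

lemma finV: "finite V" using tr by (simp add: tree_def simple_graph_def)

lemma edge: "{a,b} \<in> E \<Longrightarrow> a \<in> V \<and> b \<in> V \<and> a \<noteq> b"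
proof -
  assume "{a,b} \<in> E"
  then obtain u v where "{a,b} = {u,v}" "u \<noteq> v" "u \<in> V" "v \<in> V"
    using tr unfolding tree_def simple_graph_def by blast
  then show ?thesis by (metis doubleton_eq_iff)
qed

lemma gpath_V: "is_gpath V E xs u v \<Longrightarrow> u \<in> V \<and> v \<in> V"
  unfolding is_gpath_def by (metis hd_in_set last_in_set subsetD)

lemma path_ok: "u \<in> V \<Longrightarrow> v \<in> V \<Longrightarrow> is_gpath V E (P u v) u v"
proof -
  assume "u \<in> V" "v \<in> V"
  then have "\<exists>!xs. is_gpath V E xs u v" using tr unfolding tree_def by blast
  then show ?thesis unfolding tpath_def by (rule theI')
qed

lemma path_unique: "is_gpath V E xs u v \<Longrightarrow> P u v = xs"
proof -
  assume g: "is_gpath V E xs u v"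
  then have "u \<in> V" "v \<in> V" using gpath_V by auto
  then have "\<exists>!xs. is_gpath V E xs u v" using tr unfolding tree_def by blast
  then show ?thesis unfolding tpath_def using g by (rule the1_equality)
qed

lemma path_props:
  assumes "u \<in> V" "v \<in> V"
  shows "P u v \<noteq> []" "hd (P u v) = u" "last (P u v) = v" "distinct (P u v)"
        "set (P u v) \<subseteq> V" "successively adj (P u v)" "u \<in> set (P u v)" "v \<in> set (P u v)"
  using path_ok[OF assms] unfolding is_gpath_alt
proof -
  have g: "P u v \<noteq> [] \<and> hd (P u v) = u \<and> last (P u v) = v \<and> distinct (P u v) \<and>
     set (P u v) \<subseteq> V \<and> successively adj (P u v)" using path_ok[OF assms] unfolding is_gpath_alt .
  then show "P u v \<noteq> []" "hd (P u v) = u" "last (P u v) = v" "distinct (P u v)"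
        "set (P u v) \<subseteq> V" "successively adj (P u v)" by auto
  show "u \<in> set (P u v)" using g hd_in_set by metis
  show "v \<in> set (P u v)" using g last_in_set by metis
qed

lemma path_rev: assumes "u \<in> V" "v \<in> V" shows "P v u = rev (P u v)"
proof -
  have "is_gpath V E (rev (P u v)) v u"
    using path_props[OF assms] unfolding is_gpath_alt
    by (auto simp: hd_rev last_rev insert_commute)
  then show ?thesis by (rule path_unique)
qed

lemma path_self: "u \<in> V \<Longrightarrow> P u u = [u]"
  by (rule path_unique) (simp add: is_gpath_alt)

lemma path_adj: "adj u v \<Longrightarrow> P u v = [u,v]"
  using edge[of u v] by (intro path_unique) (auto simp: is_gpath_alt)

lemma d_eq: "d u v = length (P u v) - 1" by (simp add: tdist_def)

lemma d_self: "u \<in> V \<Longrightarrow> d u u = 0" by (simp add: d_eq path_self)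

lemma d_sym: "u \<in> V \<Longrightarrow> v \<in> V \<Longrightarrow> d v u = d u v"
  by (simp only: d_eq path_rev[of u v] length_rev)

lemma d_zero: assumes "u \<in> V" "v \<in> V" "d u v = 0" shows "u = v"
proof -
  have "length (P u v) \<noteq> 0" using path_props(1)[OF assms(1,2)] by simp
  then have "length (P u v) = 1" using assms(3) unfolding d_eq by arith
  then obtain a where "P u v = [a]" by (metis One_nat_def length_0_conv length_Suc_conv)
  then show ?thesis using path_props(2,3)[OF assms(1,2)] by simp
qed

lemma d_adj: "adj u v \<Longrightarrow> d u v = 1" by (simp add: d_eq path_adj)

lemma path_take:
  assumes "u \<in> V" "v \<in> V" "i < length (P u v)"
  shows "P u (P u v ! i) = take (Suc i) (P u v)"
proof (rule path_unique)
  have sa: "successively adj (take (Suc i) (P u v))"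
    using path_props(6)[OF assms(1,2)]
    by (metis append_take_drop_id successively_append_iff)
  show "is_gpath V E (take (Suc i) (P u v)) u (P u v ! i)"
  proof -
    have "last (take (Suc i) (P u v)) = P u v ! i" using assms(3) by (simp add: take_Suc_conv_app_nth)
    moreover have "take (Suc i) (P u v) \<noteq> []" using assms(3) by (cases "P u v") auto
    ultimately show ?thesis using path_props[OF assms(1,2)] set_take_subset[of "Suc i" "P u v"] sa
      unfolding is_gpath_alt by auto
  qed
qed

lemma path_drop:
  assumes "u \<in> V" "v \<in> V" "i < length (P u v)"
  shows "P (P u v ! i) v = drop i (P u v)"
proof (rule path_unique)
  have sa: "successively adj (drop i (P u v))"
    using path_props(6)[OF assms(1,2)]
    by (metis append_take_drop_id successively_append_iff)
  show "is_gpath V E (drop i (P u v)) (P u v ! i) v"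
  proof -
    have "drop i (P u v) \<noteq> []" using assms(3) by simp
    then show ?thesis using path_props[OF assms(1,2)] set_drop_subset[of i "P u v"] sa assms(3)
      unfolding is_gpath_alt by (auto simp: hd_drop_conv_nth)
  qed
qed

lemma path_split:
  assumes "u \<in> V" "v \<in> V" "w \<in> set (P u v)"
  shows "P u v = P u w @ tl (P w v)" "d u v = d u w + d w v"
proof -
  obtain i where i: "i < length (P u v)" "P u v ! i = w" using assms(3) by (metis in_set_conv_nth)
  have t: "P u w = take (Suc i) (P u v)" using path_take[OF assms(1,2) i(1)] i(2) by simp
  have dr: "P w v = drop i (P u v)" using path_drop[OF assms(1,2) i(1)] i(2) by simp
  have "tl (drop i (P u v)) = drop (Suc i) (P u v)" by (simp add: drop_Suc tl_drop)
  then show "P u v = P u w @ tl (P w v)" using t dr by simp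
  show "d u v = d u w + d w v" using t dr i(1) by (simp add: d_eq)
qed


lemma triangle:
  assumes "u \<in> V" "v \<in> V" "w \<in> V"
  shows "d u w \<le> d u v + d v w"
proof -
  let ?xs = "P u v @ tl (P v w)"
  have pv: "P v w = v # tl (P v w)" using path_props[OF assms(2,3)] by (metis list.collapse)
  have s1: "successively adj (P u v)" using path_props[OF assms(1,2)] by simp
  have s2: "successively adj (v # tl (P v w))" using path_props[OF assms(2,3)] pv by metis
  have s3: "successively adj (tl (P v w))" using s2 by (auto simp: successively_Cons)
  have s4: "tl (P v w) \<noteq> [] \<Longrightarrow> adj v (hd (tl (P v w)))" using s2 by (auto simp: successively_Cons)
  have "successively adj ?xs" using s1 s3 s4 path_props(3)[OF assms(1,2)]
    by (auto simp: successively_append_iff)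
  moreover have "set ?xs \<subseteq> V" using path_props(5)[OF assms(1,2)] path_props(5)[OF assms(2,3)]
  proof -
    have "set (tl (P v w)) \<subseteq> set (P v w)" by (cases "P v w") auto
    then show ?thesis using path_props(5)[OF assms(1,2)] path_props(5)[OF assms(2,3)] by auto
  qed
  ultimately have wk: "walk V E ?xs" unfolding walk_def using path_props(1)[OF assms(1,2)] by simp
  have hd: "hd ?xs = u" using path_props[OF assms(1,2)] by simp
  have lst: "last ?xs = w"
  proof (cases "tl (P v w) = []")
    case True
    then have "w = v" using pv path_props(3)[OF assms(2,3)] by (metis last_ConsL)
    then show ?thesis using True path_props(3)[OF assms(1,2)] by simp
  next
    case False
    then have "last (tl (P v w)) = w" using pv path_props(3)[OF assms(2,3)] by (metis last_ConsR)
    then show ?thesis using False by simp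
  qed
  obtain ys where ys: "is_gpath V E ys u w" "length ys \<le> length ?xs"
    using walk_to_path[OF wk] hd lst by auto
  have "P u w = ys" using path_unique[OF ys(1)] .
  then show ?thesis using ys(2) path_props(1)[OF assms(1,2)] path_props(1)[OF assms(2,3)]
    by (simp add: d_eq)
qed

lemma adj_V: "adj p q \<Longrightarrow> p \<in> V" "adj p q \<Longrightarrow> q \<in> V" "adj p q \<Longrightarrow> p \<noteq> q"
  using edge by auto

lemma adj_sym: "adj p q \<Longrightarrow> adj q p" by (simp add: insert_commute)

lemma path_hd_cons: "u \<in> V \<Longrightarrow> v \<in> V \<Longrightarrow> P u v = u # tl (P u v)"
  using path_props(1,2) by (metis list.collapse)

lemma adj_cons:
  assumes "adj p q" "z \<in> V" "q \<in> set (P p z)"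
  shows "P p z = p # P q z"
proof -
  have pq: "p \<in> V" "q \<in> V" using adj_V assms(1) by auto
  have "P p z = P p q @ tl (P q z)" using path_split(1)[OF pq(1) assms(2,3)] .
  also have "P p q = [p,q]" using path_adj[OF assms(1)] .
  finally show ?thesis using path_hd_cons[OF pq(2) assms(2)] by (metis append_Cons append_Nil)
qed

lemma dichot:
  assumes "adj p q" "z \<in> V"
  shows "q \<in> set (P p z) \<or> p \<in> set (P q z)"
proof (cases "q \<in> set (P p z)")
  case True then show ?thesis by simp
next
  case False
  then have nq: "q \<notin> set (P p z)" .
  have pq: "p \<in> V" "q \<in> V" using adj_V assms(1) by auto
  have "is_gpath V E (q # P p z) q z"
    unfolding is_gpath_alt using path_props[OF pq(1) assms(2)] nq pq adj_sym[OF assms(1)]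
    by (auto simp: successively_Cons)
  then have "P q z = q # P p z" by (rule path_unique)
  then show ?thesis using path_props(7)[OF pq(1) assms(2)] by simp
qed

lemma excl:
  assumes "adj p q" "z \<in> V" "q \<in> set (P p z)" "p \<in> set (P q z)"
  shows False
proof -
  have "P p z = p # P q z" using adj_cons assms by blast
  moreover have "P q z = q # P p z" using adj_cons[OF adj_sym[OF assms(1)] assms(2,4)] .
  ultimately have "length (P p z) = Suc (length (P q z))" "length (P q z) = Suc (length (P p z))"
    by (metis length_Cons)+
  then show False by simp
qed

lemma prefix_second:
  assumes "adj p q" "s \<in> V" "z \<in> V" "P p z = p # P q z" "s \<in> set (P q z)"
  shows "q \<in> set (P p s)"
proof -
  have pq: "p \<in> V" "q \<in> V" using adj_V assms(1) by auto
  have sz: "s \<in> set (P p z)" using assms(4,5) by simp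
  have spl: "P p z = P p s @ tl (P s z)" using path_split(1)[OF pq(1) assms(3) sz] .
  have "distinct (P p z)" using path_props(4)[OF pq(1) assms(3)] .
  then have "p \<notin> set (P q z)" using assms(4) by (metis distinct.simps(2))
  then have sp: "s \<noteq> p" using assms(5) by blast
  obtain r where r: "P p s = p # r" using path_hd_cons[OF pq(1) assms(2)] by blast
  have "r \<noteq> []" using r path_props(3)[OF pq(1) assms(2)] sp by auto
  then have "hd (P q z) = hd r" using spl r assms(4) by simp
  then have "q = hd r" using path_props(2)[OF pq(2) assms(3)] by simp
  then show ?thesis using r \<open>r \<noteq> []\<close> by simp
qed

lemma edge_split:
  assumes "adj p q" "z \<in> V" "u \<in> V" "q \<in> set (P p z)" "p \<in> set (P q u)"
  shows "P z u = rev (P q z) @ P p u"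
proof (rule path_unique)
  have pq: "p \<in> V" "q \<in> V" using adj_V assms(1) by auto
  have c1: "P p z = p # P q z" using adj_cons assms(1,2,4) by blast
  have c2: "P q u = q # P p u" using adj_cons[OF adj_sym[OF assms(1)] assms(3,5)] .
  have disj: "set (P q z) \<inter> set (P p u) = {}"
  proof (rule ccontr)
    assume "set (P q z) \<inter> set (P p u) \<noteq> {}"
    then obtain s where s: "s \<in> set (P q z)" "s \<in> set (P p u)" by blast
    have sV: "s \<in> V" using s(1) path_props(5)[OF pq(2) assms(2)] by blast
    have "q \<in> set (P p s)" using prefix_second[OF assms(1) sV assms(2) c1 s(1)] .
    moreover have "p \<in> set (P q s)" using prefix_second[OF adj_sym[OF assms(1)] sV assms(3) c2 s(2)] .
    ultimately show False using excl[OF assms(1) sV] by blast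
  qed
  have lq: "last (rev (P q z)) = q" using path_props(1,2)[OF pq(2) assms(2)] by (simp add: last_rev)
  have hp: "hd (P p u) = p" using path_props(2)[OF pq(1) assms(3)] .
  show "is_gpath V E (rev (P q z) @ P p u) z u"
    unfolding is_gpath_alt
    using path_props[OF pq(2) assms(2)] path_props[OF pq(1) assms(3)] disj lq hp adj_sym[OF assms(1)]
    by (auto simp: successively_append_iff hd_append hd_rev insert_commute)
qed

lemma edge_dist:
  assumes "adj p q" "z \<in> V" "u \<in> V" "q \<in> set (P p z)" "p \<in> set (P q u)"
  shows "d z u = d z q + 1 + d p u" "p \<in> set (P z u)" "q \<in> set (P z u)"
proof -
  have pq: "p \<in> V" "q \<in> V" using adj_V assms(1) by auto
  have e: "P z u = rev (P q z) @ P p u" using edge_split[OF assms] .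
  have "d z q = d q z" using d_sym[OF pq(2) assms(2)] .
  moreover obtain n m where "length (P q z) = Suc n" "length (P p u) = Suc m"
    using path_props(1)[OF pq(2) assms(2)] path_props(1)[OF pq(1) assms(3)]
    by (metis length_Suc_conv list.exhaust)
  ultimately show "d z u = d z q + 1 + d p u" using e by (simp add: d_eq)
  show "p \<in> set (P z u)" using e path_props(7)[OF pq(1) assms(3)] by simp
  show "q \<in> set (P z u)" using e path_props(7)[OF pq(2) assms(2)] by simp
qed

abbreviation "side p q \<equiv> {z \<in> V. q \<in> set (P p z)}"
abbreviation "N v \<equiv> {u \<in> V. adj u v}"

lemma finN: "finite (N v)" using finV by simp

lemma deg_N: "degree V E v = card (N v)" by (simp add: degree_def)

lemma second:
  assumes "v \<in> V" "w \<in> V" "v \<noteq> w"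
  shows "Suc (Suc 0) \<le> length (P v w)" "adj v (P v w ! 1)" "P v w ! 1 \<in> set (P v w)"
        "P v w ! 1 \<in> V" "w \<in> side v (P v w ! 1)"
proof -
  have "length (P v w) \<noteq> 1"
  proof
    assume "length (P v w) = 1"
    then obtain a where "P v w = [a]" by (metis One_nat_def length_0_conv length_Suc_conv)
    then show False using path_props(2,3)[OF assms(1,2)] assms(3) by simp
  qed
  moreover have "length (P v w) \<noteq> 0" using path_props(1)[OF assms(1,2)] by simp
  ultimately show l: "Suc (Suc 0) \<le> length (P v w)" by arith
  have "adj (P v w ! 0) (P v w ! Suc 0)"
    using successively_nth[OF path_props(6)[OF assms(1,2)]] l by simp
  moreover have "P v w ! 0 = v" using path_props(1,2)[OF assms(1,2)] by (simp add: hd_conv_nth)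
  ultimately show a: "adj v (P v w ! 1)" by simp
  show s: "P v w ! 1 \<in> set (P v w)" using l by simp
  show "P v w ! 1 \<in> V" using adj_V(2)[OF a] .
  show "w \<in> side v (P v w ! 1)" using assms(2) s by simp
qed

lemma side_cons: "adj p q \<Longrightarrow> z \<in> side p q \<Longrightarrow> P p z = p # P q z"
  using adj_cons by blast

lemma side_disj:
  assumes "adj v p" "adj v p'" "z \<in> side v p" "z \<in> side v p'"
  shows "p = p'"
proof -
  have "P v z = v # P p z" "P v z = v # P p' z" using side_cons assms by blast+
  then have "hd (P p z) = hd (P p' z)" by simp
  then show ?thesis using path_props(2) adj_V assms by (metis (no_types, lifting) mem_Collect_eq)
qed

lemma not_side: "adj p q \<Longrightarrow> z \<in> V \<Longrightarrow> z \<notin> side p q \<Longrightarrow> p \<in> set (P q z)"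
  using dichot by blast

lemma self_not_side: "adj p q \<Longrightarrow> p \<notin> side p q"
  using path_self adj_V by fastforce

lemma leaf_ext:
  assumes "c \<in> V" "x \<in> V" "c \<noteq> x"
  shows "\<exists>l. leaf V E l \<and> x \<in> set (P c l)"
proof -
  let ?A = "{z \<in> V. x \<in> set (P c z)}"
  have fA: "finite ?A" using finV by simp
  have xA: "x \<in> ?A" using assms path_props(8)[OF assms(1,2)] by simp
  obtain z where zA: "z \<in> ?A" and zmax: "\<forall>y\<in>?A. d c y \<le> d c z"
    using finite_argmax[OF fA, where f="d c"] xA by blast
  have zV: "z \<in> V" and xz: "x \<in> set (P c z)" using zA by auto
  have zc: "z \<noteq> c" using xz assms(1,3) path_self by fastforce
  let ?pr = "P z c ! 1"
  have pr: "adj z ?pr" "?pr \<in> V" using second[OF zV assms(1) zc] by auto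
  have "N z = {?pr}"
  proof
    show "{?pr} \<subseteq> N z" using pr adj_sym by auto
    show "N z \<subseteq> {?pr}"
    proof
      fix y assume y: "y \<in> N z"
      then have ay: "adj z y" "y \<in> V" using adj_sym by auto
      have "y \<in> set (P z c) \<or> z \<in> set (P y c)" using dichot[OF ay(1) assms(1)] .
      then show "y \<in> {?pr}"
      proof
        assume "z \<in> set (P y c)"
        then have e: "P y c = y # P z c" using adj_cons[OF adj_sym[OF ay(1)] assms(1)] by blast
        then have "P c y = P c z @ [y]" using path_rev[OF ay(2) assms(1)] path_rev[OF zV assms(1)] by simp
        then have "x \<in> set (P c y)" "d c y = Suc (d c z)" using xz path_props(1)[OF assms(1) zV]
          by (auto simp: d_eq)
        then show ?thesis using zmax ay(2) by force
      next
        assume "y \<in> set (P z c)"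
        then have "P z c = z # P y c" using adj_cons[OF ay(1) assms(1)] by blast
        then have "?pr = hd (P y c)" using path_props(1)[OF ay(2) assms(1)] by (simp add: hd_conv_nth)
        then show ?thesis using path_props(2)[OF ay(2) assms(1)] by simp
      qed
    qed
  qed
  then have "leaf V E z" using zV by (simp add: leaf_def deg_N)
  then show ?thesis using xz by blast
qed

lemma closest:
  assumes "set xs \<subseteq> V" "xs \<noteq> []" "v \<in> V" "v \<notin> set xs"
  shows "\<exists>s z'. s \<in> set xs \<and> adj s z' \<and> z' \<notin> set xs \<and> v \<in> side s z'"
proof -
  obtain s where s: "s \<in> set xs" and smin: "\<forall>y\<in>set xs. d v s \<le> d v y"
    using finite_argmin[of "set xs" "hd xs" "d v"] assms(2) by auto
  have sV: "s \<in> V" using s assms(1) by auto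
  have sv: "s \<noteq> v" using s assms(4) by auto
  let ?z = "P s v ! 1"
  have z: "adj s ?z" "v \<in> side s ?z" "?z \<in> V" using second[OF sV assms(3) sv] by auto
  have "P s v = s # P ?z v" using side_cons[OF z(1,2)] .
  then have "length (P s v) = Suc (length (P ?z v))" by (metis length_Cons)
  then have "d s v = Suc (d ?z v)" using path_props(1)[OF z(3) assms(3)] unfolding d_eq by simp
  then have "d v ?z < d v s" using d_sym[OF sV assms(3)] d_sym[OF z(3) assms(3)] by simp
  then have "?z \<notin> set xs" using smin by force
  then show ?thesis using s z by blast
qed

lemma three_nb_major:
  assumes "v \<in> V" "adj v a" "adj v b" "adj v c" "a \<noteq> b" "a \<noteq> c" "b \<noteq> c"
  shows "major V E v"
proof -
  have "{a,b,c} \<subseteq> N v" using assms adj_V adj_sym by auto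
  then have "card {a,b,c} \<le> card (N v)" using finN by (rule card_mono[rotated])
  then have "3 \<le> degree V E v" using assms(5-7) by (simp add: deg_N)
  then show ?thesis using assms(1) by (simp add: major_def)
qed

lemma nomajor_path:
  assumes "\<forall>v\<in>V. \<not> major V E v"
  shows "is_path_graph V E"
proof -
  have ne: "V \<noteq> {}" using tr by (simp add: tree_def)
  have fVV: "finite (V \<times> V)" using finV by simp
  obtain xy where xy: "xy \<in> V \<times> V" and xymax: "\<forall>q\<in>V \<times> V. d (fst q) (snd q) \<le> d (fst xy) (snd xy)"
    using finite_argmax[OF fVV, where f="\<lambda>q. d (fst q) (snd q)"] ne by fastforce
  obtain x y where xyd: "xy = (x,y)" by (cases xy)
  have xV: "x \<in> V" and yV: "y \<in> V" using xy xyd by auto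
  have mx: "\<And>a b. a \<in> V \<Longrightarrow> b \<in> V \<Longrightarrow> d a b \<le> d x y" using xymax xyd by force
  let ?xs = "P x y"
  note pp = path_props[OF xV yV]
  have setV: "set ?xs = V"
  proof
    show "set ?xs \<subseteq> V" using pp by simp
    show "V \<subseteq> set ?xs"
    proof
      fix v assume vV: "v \<in> V"
      show "v \<in> set ?xs"
      proof (rule ccontr)
        assume "v \<notin> set ?xs"
        then obtain s z' where sz: "s \<in> set ?xs" "adj s z'" "z' \<notin> set ?xs"
          using closest[OF pp(5) pp(1) vV] by blast
        obtain j where j: "j < length ?xs" "?xs ! j = s" using sz(1) by (metis in_set_conv_nth)
        have zV: "z' \<in> V" using adj_V sz(2) by auto
        show False
        proof (cases "j = 0")
          case True
          then have "s = x" using j pp by (simp add: hd_conv_nth)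
          then have "is_gpath V E (z' # ?xs) z' y"
            unfolding is_gpath_alt using pp sz zV adj_sym by (auto simp: successively_Cons)
          then have "P z' y = z' # ?xs" by (rule path_unique)
          then have "d z' y = Suc (d x y)" using pp by (simp add: d_eq)
          then show False using mx[OF zV yV] by simp
        next
          case False
          show False
          proof (cases "j = length ?xs - 1")
            case True
            then have "s = y" using j pp by (simp add: last_conv_nth)
            then have "is_gpath V E (?xs @ [z']) x z'"
              unfolding is_gpath_alt using pp sz zV by (auto simp: successively_append_iff)
            then have "P x z' = ?xs @ [z']" by (rule path_unique)
            then have "d x z' = Suc (d x y)" using pp by (simp add: d_eq)
            then show False using mx[OF xV zV] by simp
          next
            case False2: False
            have j1: "Suc j < length ?xs" using False2 j(1) by arith
            have a1: "adj (?xs ! (j - 1)) (?xs ! j)" using successively_nth[OF pp(6), of "j - 1"] j False by simp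
            have a2: "adj (?xs ! j) (?xs ! Suc j)" using successively_nth[OF pp(6), of j] j1 by simp
            have n1: "?xs ! (j - 1) \<noteq> ?xs ! Suc j" using pp(4) j1 by (simp add: nth_eq_iff_index_eq)
            have n2: "?xs ! (j-1) \<in> set ?xs" "?xs ! Suc j \<in> set ?xs" using j j1 by auto
            have "major V E s"
              using three_nb_major[of s "?xs ! (j-1)" "?xs ! Suc j" z'] a1 a2 adj_sym sz n1 n2 j
                adj_V by (metis (no_types, lifting))
            then show False using assms adj_V sz(2) by blast
          qed
        qed
      qed
    qed
  qed
  have claim: "\<And>i j. i < j \<Longrightarrow> j < length ?xs \<Longrightarrow> adj (?xs ! i) (?xs ! j) \<Longrightarrow> j = Suc i"
  proof (rule ccontr)
    fix i j assume ij: "i < j" "j < length ?xs" "adj (?xs ! i) (?xs ! j)" "j \<noteq> Suc i"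
    have iV: "?xs ! i \<in> V" using ij pp by auto
    have il: "i < length ?xs" using ij by simp
    have dr: "P (?xs ! i) y = drop i ?xs" using path_drop[OF xV yV il] .
    have jl: "j - i < length (P (?xs ! i) y)" using dr ij by simp
    have "P (?xs ! i) (P (?xs ! i) y ! (j - i)) = take (Suc (j - i)) (P (?xs ! i) y)"
      using path_take[OF iV yV jl] .
    moreover have "P (?xs ! i) y ! (j - i) = ?xs ! j" using dr ij by simp
    ultimately have "P (?xs ! i) (?xs ! j) = take (Suc (j - i)) (drop i ?xs)" using dr by simp
    then have "length (P (?xs ! i) (?xs ! j)) = Suc (j - i)" using ij by simp
    moreover have "length (P (?xs ! i) (?xs ! j)) = 2" using path_adj[OF ij(3)] by simp
    ultimately show False using ij by simp
  qed
  have Eeq: "E = {{?xs ! i, ?xs ! Suc i} | i. Suc i < length ?xs}"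
  proof
    show "{{?xs ! i, ?xs ! Suc i} | i. Suc i < length ?xs} \<subseteq> E"
      using successively_nth[OF pp(6)] by blast
    show "E \<subseteq> {{?xs ! i, ?xs ! Suc i} | i. Suc i < length ?xs}"
    proof
      fix e assume eE: "e \<in> E"
      then obtain a b where ab: "e = {a,b}" "a \<noteq> b" "a \<in> V" "b \<in> V"
        using tr unfolding tree_def simple_graph_def by blast
      obtain i where i: "i < length ?xs" "?xs ! i = a" using ab setV by (metis in_set_conv_nth)
      obtain j where j: "j < length ?xs" "?xs ! j = b" using ab setV by (metis in_set_conv_nth)
      have "i \<noteq> j" using i j ab by auto
      then show "e \<in> {{?xs ! i, ?xs ! Suc i} | i. Suc i < length ?xs}"
      proof (cases "i < j")
        case True
        then have "j = Suc i" using claim[OF True j(1)] eE ab i j by simp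
        then show ?thesis using ab i j by blast
      next
        case False
        then have ji: "j < i" using \<open>i \<noteq> j\<close> by simp
        then have "i = Suc j" using claim[OF ji i(1)] eE ab i j by (simp add: insert_commute)
        then show ?thesis using ab i j by (auto simp: insert_commute)
      qed
    qed
  qed
  show ?thesis unfolding is_path_graph_def using pp(4) setV Eeq by blast
qed

lemma two_nb_deg:
  assumes "v \<in> V" "adj v a" "adj v b" "a \<noteq> b"
  shows "2 \<le> degree V E v"
proof -
  have "{a,b} \<subseteq> N v" using assms adj_V adj_sym by auto
  then have "card {a,b} \<le> card (N v)" using finN by (rule card_mono[rotated])
  then show ?thesis using assms(4) by (simp add: deg_N)
qed

lemma interior_nbs:
  assumes "a \<in> V" "b \<in> V" "0 < j" "Suc j < length (P a b)"
  shows "adj (P a b ! j) (P a b ! (j - 1))" "adj (P a b ! j) (P a b ! Suc j)"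
        "P a b ! (j - 1) \<noteq> P a b ! Suc j"
proof -
  note pp = path_props[OF assms(1,2)]
  show "adj (P a b ! j) (P a b ! (j - 1))" using successively_nth[OF pp(6), of "j - 1"] assms
    by (simp add: insert_commute)
  show "adj (P a b ! j) (P a b ! Suc j)" using successively_nth[OF pp(6), of j] assms by simp
  show "P a b ! (j - 1) \<noteq> P a b ! Suc j" using pp(4) assms by (simp add: nth_eq_iff_index_eq)
qed

lemma leaf_end:
  assumes "leaf V E w" "a \<in> V" "b \<in> V" "w \<in> set (P a b)"
  shows "w = a \<or> w = b"
proof (rule ccontr)
  assume nw: "\<not> (w = a \<or> w = b)"
  obtain j where j: "j < length (P a b)" "P a b ! j = w" using assms(4) by (metis in_set_conv_nth)
  note pp = path_props[OF assms(2,3)]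
  have "j \<noteq> 0" using j nw pp by (metis hd_conv_nth)
  moreover have "j \<noteq> length (P a b) - 1" using j nw pp by (metis last_conv_nth)
  ultimately have "0 < j" "Suc j < length (P a b)" using j by arith+
  note nb = interior_nbs[OF assms(2,3) this]
  have wV: "w \<in> V" using assms(1) by (simp add: leaf_def)
  have "2 \<le> degree V E w" using two_nb_deg[OF wV] nb j(2) by metis
  then show False using assms(1) by (simp add: leaf_def)
qed

lemma term_basic:
  assumes "terminal_of V E u t"
  shows "u \<in> V" "t \<in> V" "u \<noteq> t" "leaf V E u" "major V E t"
  using assms by (auto simp: terminal_of_def leaf_def major_def)

lemma term_unique:
  assumes "terminal_of V E u t" "terminal_of V E u t'"
  shows "t = t'"
  using assms unfolding terminal_of_def by (metis less_asym)

lemma term_nonmajor: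
  assumes "terminal_of V E u t" "z \<in> set (P t u)" "z \<noteq> t"
  shows "\<not> major V E z"
proof
  assume mz: "major V E z"
  note tb = term_basic[OF assms(1)]
  have zV: "z \<in> V" using assms(2) path_props(5)[OF tb(2,1)] by auto
  have "d t u = d t z + d z u" using path_split(2)[OF tb(2,1) assms(2)] .
  moreover have "d t z > 0" using d_zero[OF tb(2) zV] assms(3) by auto
  ultimately have "d u z < d u t" using d_sym[OF tb(2,1)] d_sym[OF zV tb(1)] by simp
  moreover have "d u t < d u z" using assms(1) mz assms(3) unfolding terminal_of_def by blast
  ultimately show False by simp
qed

lemma term_second:
  assumes "terminal_of V E u t"
  shows "adj t (P t u ! 1)" "P t u ! 1 \<in> leg V E t u" "d t (P t u ! 1) = 1" "P t u ! 1 \<in> V"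
proof -
  note tb = term_basic[OF assms(1)]
  note s = second[OF tb(2,1) tb(3)[symmetric]]
  show a: "adj t (P t u ! 1)" using s by simp
  show "P t u ! 1 \<in> leg V E t u" using s adj_V(3)[OF a] by (simp add: leg_def)
  show "d t (P t u ! 1) = 1" using d_adj[OF a] .
  show "P t u ! 1 \<in> V" using s by simp
qed

lemma leg_side:
  assumes "terminal_of V E u t"
  shows "leg V E t u = side t (P t u ! 1)"
proof
  note tb = term_basic[OF assms(1)]
  note pp = path_props[OF tb(2,1)]
  let ?t1 = "P t u ! 1"
  have a: "adj t ?t1" using term_second[OF assms] by simp
  have len: "Suc (Suc 0) \<le> length (P t u)" using second[OF tb(2,1) tb(3)[symmetric]] by simp
  show "leg V E t u \<subseteq> side t ?t1"
  proof
    fix z assume "z \<in> leg V E t u"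
    then have z: "z \<in> set (P t u)" "z \<noteq> t" by (auto simp: leg_def)
    obtain i where i: "i < length (P t u)" "P t u ! i = z" using z(1) by (metis in_set_conv_nth)
    have "i \<noteq> 0" using i z pp by (metis hd_conv_nth)
    have "P t z = take (Suc i) (P t u)" using path_take[OF tb(2,1) i(1)] i(2) by simp
    moreover have "?t1 \<in> set (take (Suc i) (P t u))" using \<open>i \<noteq> 0\<close> len
      by (simp add: in_set_conv_nth) (metis One_nat_def Suc_le_lessD Suc_lessI less_Suc_eq_0_disj nth_take)
    moreover have "z \<in> V" using z pp by auto
    ultimately show "z \<in> side t ?t1" by simp
  qed
  show "side t ?t1 \<subseteq> leg V E t u"
  proof
    fix v assume v: "v \<in> side t ?t1"
    then have vV: "v \<in> V" by simp
    have vt: "v \<noteq> t" using v self_not_side[OF a] by blast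
    show "v \<in> leg V E t u"
    proof (rule ccontr)
      assume "v \<notin> leg V E t u"
      then have vn: "v \<notin> set (P t u)" using vt by (simp add: leg_def)
      obtain s z' where sz: "s \<in> set (P t u)" "adj s z'" "z' \<notin> set (P t u)" "v \<in> side s z'"
        using closest[OF pp(5) pp(1) vV vn] by blast
      show False
      proof (cases "s = t")
        case True
        then have "z' = ?t1" using side_disj[OF sz(2)[unfolded True] a] sz(4) v True by blast
        then show False using sz(3) len by simp
      next
        case False
        have sV: "s \<in> V" using sz pp by auto
        have nm: "\<not> major V E s" using term_nonmajor[OF assms sz(1) False] .
        obtain j where j: "j < length (P t u)" "P t u ! j = s" using sz(1) by (metis in_set_conv_nth)
        have j0: "0 < j" using j False pp by (metis hd_conv_nth gr0I)
        show False
        proof (cases "Suc j < length (P t u)")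
          case True
          note nb = interior_nbs[OF tb(2,1) j0 True]
          have "z' \<noteq> P t u ! (j - 1)" "z' \<noteq> P t u ! Suc j" using sz(3) j True by auto
          then have "major V E s" using three_nb_major[OF sV] nb j(2) sz(2) by metis
          then show False using nm by simp
        next
          case False
          then have "s = u" using j pp by (metis Suc_lessI last_conv_nth diff_Suc_1 list.size(3) not_less0)
          have "adj s (P t u ! (j - 1))" using successively_nth[OF pp(6), of "j - 1"] j j0
            by (simp add: insert_commute)
          moreover have "z' \<noteq> P t u ! (j - 1)" using sz(3) j by auto
          ultimately have "2 \<le> degree V E s" using two_nb_deg[OF sV] sz(2) by metis
          then show False using tb(4) \<open>s = u\<close> by (simp add: leaf_def)
        qed
      qed
    qed
  qed
qed

lemma legs_disjoint:
  assumes "terminal_of V E u t" "terminal_of V E u' t'" "u \<noteq> u'"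
  shows "leg V E t u \<inter> leg V E t' u' = {}"
proof (rule ccontr)
  assume "leg V E t u \<inter> leg V E t' u' \<noteq> {}"
  then obtain z where z: "z \<in> leg V E t u" "z \<in> leg V E t' u'" by blast
  note tb = term_basic[OF assms(1)] and tb' = term_basic[OF assms(2)]
  let ?t1 = "P t u ! 1" and ?t1' = "P t' u' ! 1"
  have a: "adj t ?t1" and a': "adj t' ?t1'" using term_second assms by auto
  have zs: "z \<in> side t ?t1" "z \<in> side t' ?t1'" using z leg_side assms by auto
  have legnm: "\<And>w u t. terminal_of V E u t \<Longrightarrow> w \<in> leg V E t u \<Longrightarrow> \<not> major V E w"
    using term_nonmajor by (auto simp: leg_def)
  show False
  proof (cases "t = t'")
    case False
    have "t' \<notin> side t ?t1" using legnm[OF assms(1)] leg_side[OF assms(1)] tb'(5) by blast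
    then have "t \<in> set (P ?t1 t')" using not_side[OF a tb'(2)] by blast
    then have "t \<in> set (P z t')" using edge_dist(2)[OF a _ tb'(2) _ ] zs by blast
    then have tz: "t \<in> set (P t' z)" using path_rev[OF tb'(2), of z] zs by simp
    have "P t' z = t' # P ?t1' z" using side_cons[OF a' zs(2)] .
    then have "t \<in> set (P ?t1' z)" using tz False by simp
    then have "?t1' \<in> set (P t' t)" using prefix_second[OF a' tb(2) _ side_cons[OF a' zs(2)]] zs by blast
    then have "t \<in> side t' ?t1'" using tb(2) by simp
    then have "t \<in> leg V E t' u'" using leg_side[OF assms(2)] by simp
    then show False using legnm[OF assms(2)] tb(5) by blast
  next
    case True
    have "?t1 = ?t1'" using side_disj[OF a a'[folded True]] zs True by blast
    then have "leg V E t u = leg V E t u'" using leg_side assms True by simp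
    moreover have "u \<in> leg V E t u" using tb path_props(8)[OF tb(2,1)] by (simp add: leg_def)
    ultimately have "u \<in> set (P t u')" by (simp add: leg_def)
    then have "u = t \<or> u = u'" using leaf_end[OF tb(4) tb(2) tb'(1)] True by simp
    then show False using tb(3) assms(3) by simp
  qed
qed


end


lemma sum_12:
  assumes "finite A" "B \<subseteq> A"
  shows "(\<Sum>t\<in>A. if t \<in> B then 2 else 1 :: nat) = card A + card B"
proof -
  have "(\<Sum>t\<in>A. if t \<in> B then 2 else 1 :: nat) = (\<Sum>t\<in>A. 1 + (if t \<in> B then 1 else 0))"
    by (rule sum.cong) auto
  also have "\<dots> = (\<Sum>t\<in>A. 1) + (\<Sum>t\<in>A. if t \<in> B then 1 else 0)" by (rule sum.distrib)
  also have "(\<Sum>t\<in>A. if t \<in> B then 1 else 0 :: nat) = (\<Sum>t\<in>{t \<in> A. t \<in> B}. 1)"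
    using sum.inter_filter[OF assms(1), of "\<lambda>_. 1::nat" "\<lambda>t. t \<in> B"] by simp
  also have "{t \<in> A. t \<in> B} = B" using assms(2) by blast
  finally show ?thesis by simp
qed

lemma three_distinct:
  assumes "\<not> card S \<le> 2"
  shows "\<exists>a b c. a \<in> S \<and> b \<in> S \<and> c \<in> S \<and> a \<noteq> b \<and> a \<noteq> c \<and> b \<noteq> c"
proof -
  have fin: "finite S" using assms card.infinite by force
  have "S \<noteq> {}" using assms by auto
  then obtain a where a: "a \<in> S" by blast
  have c1: "card (S - {a}) = card S - 1" using card_Diff_singleton[OF a] .
  then have "card (S - {a}) \<noteq> 0" using assms by simp
  then have "S - {a} \<noteq> {}" by force
  then obtain b where b: "b \<in> S - {a}" by blast
  have "card (S - {a} - {b}) = card (S - {a}) - 1" using card_Diff_singleton[OF b] .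
  then have "card (S - {a} - {b}) \<noteq> 0" using assms c1 by simp
  then have "S - {a} - {b} \<noteq> {}" by force
  then obtain c where c: "c \<in> S - {a} - {b}" by blast
  show ?thesis using a b c by blast
qed

context tr begin
lemma pos_take:
  assumes "x \<in> V" "y \<in> V" "j \<le> i" "i < length (P x y)"
  shows "P x y ! j \<in> set (P x (P x y ! i))"
  using path_take[OF assms(1,2,4)] assms(3,4) by (simp add: in_set_conv_nth) (metis le_imp_less_Suc nth_take)

lemma pos_drop:
  assumes "x \<in> V" "y \<in> V" "i \<le> j" "j < length (P x y)"
  shows "P x y ! j \<in> set (P (P x y ! i) y)"
proof -
  have "P (P x y ! i) y = drop i (P x y)" using path_drop[OF assms(1,2)] assms by simp
  moreover have "drop i (P x y) ! (j - i) = P x y ! j" using assms by simp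
  moreover have "j - i < length (drop i (P x y))" using assms by simp
  ultimately show ?thesis by (metis nth_mem)
qed

lemma pos_facts:
  assumes "x \<in> V" "y \<in> V" "i < length (P x y)"
  shows "P x y ! i \<in> V" "d x (P x y ! i) = i" "d (P x y ! i) y = length (P x y) - 1 - i"
proof -
  show v: "P x y ! i \<in> V" using assms path_props(5)[OF assms(1,2)] nth_mem by blast
  show "d x (P x y ! i) = i" using path_take[OF assms] assms(3) by (simp add: d_eq)
  show "d (P x y ! i) y = length (P x y) - 1 - i" using path_drop[OF assms] by (simp add: d_eq)
qed

lemma pos_adj:
  assumes "x \<in> V" "y \<in> V" "Suc i < length (P x y)"
  shows "adj (P x y ! i) (P x y ! Suc i)"
  using successively_nth[OF path_props(6)[OF assms(1,2)] assms(3)] .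

lemma midpoint:
  assumes xV: "x \<in> V" and yV: "y \<in> V" and xy: "x \<noteq> y" and WV: "W \<subseteq> V" and Wne: "W \<noteq> {}"
    and eq: "\<forall>w\<in>W. d x w = d y w"
  shows "\<exists>c a b. adj c a \<and> adj c b \<and> a \<noteq> b \<and> x \<in> side c a \<and> y \<in> side c b \<and>
            d c x = d c y \<and> W \<inter> side c a = {} \<and> W \<inter> side c b = {}"
proof -
  let ?Q = "P x y"
  let ?n = "length ?Q - 1"
  note pp = path_props[OF xV yV]
  have n1: "1 \<le> ?n" using second(1)[OF xV yV xy] by simp
  have lenQ: "length ?Q = Suc ?n" using pp(1) by simp
  show ?thesis
  proof (cases "even ?n")
    case False
    then obtain k where k: "?n = Suc (2 * k)" by (metis oddE Suc_eq_plus1 add.commute)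
    let ?p = "?Q ! k" and ?q = "?Q ! Suc k"
    have kl: "Suc k < length ?Q" using k lenQ by simp
    have apq: "adj ?p ?q" using pos_adj[OF xV yV kl] .
    have pV: "?p \<in> V" and qV: "?q \<in> V" using pos_facts(1)[OF xV yV] kl by auto
    obtain w0 where w0: "w0 \<in> W" using Wne by blast
    have w0V: "w0 \<in> V" using w0 WV by auto
    have dxp: "d x ?p = k" using pos_facts(2)[OF xV yV] kl by simp
    have dqy: "d ?q y = k" using pos_facts(3)[OF xV yV kl] k by simp
    have dxq: "d x ?q = Suc k" using pos_facts(2)[OF xV yV kl] .
    have dpy: "d ?p y = Suc k" using pos_facts(3)[OF xV yV] kl k by simp
    have px: "?p \<in> set (P ?q x)"
      using pos_take[OF xV yV _ kl, of k] path_rev[OF xV qV] by simp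
    have qy: "?q \<in> set (P ?p y)" using pos_drop[OF xV yV _ kl, of k] by simp
    have "?q \<in> set (P ?p w0) \<or> ?p \<in> set (P ?q w0)" using dichot[OF apq w0V] .
    then show ?thesis
    proof
      assume h: "?p \<in> set (P ?q w0)"
      have "d w0 y = d w0 ?p + 1 + d ?q y" using edge_dist(1)[OF adj_sym[OF apq] w0V yV h qy] .
      moreover have "d x w0 \<le> d x ?p + d ?p w0" using triangle[OF xV pV w0V] .
      ultimately have "d x w0 < d y w0" using dxp dqy d_sym[OF yV w0V] d_sym[OF pV w0V] by simp
      then show ?thesis using eq w0 by simp
    next
      assume h: "?q \<in> set (P ?p w0)"
      have "d w0 x = d w0 ?q + 1 + d ?p x" using edge_dist(1)[OF apq w0V xV h px] .
      moreover have "d y w0 \<le> d y ?q + d ?q w0" using triangle[OF yV qV w0V] .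
      ultimately have "d y w0 < d x w0" using dxp dqy d_sym[OF xV w0V] d_sym[OF qV w0V]
        d_sym[OF xV pV] d_sym[OF qV yV] by simp
      then show ?thesis using eq w0 by simp
    qed
  next
    case True
    then obtain k where k: "?n = 2 * k" by (rule evenE)
    have k1: "1 \<le> k" using k n1 by simp
    let ?c = "?Q ! k" and ?a = "?Q ! (k - 1)" and ?b = "?Q ! Suc k"
    have kl: "Suc k < length ?Q" using k lenQ k1 by simp
    have kl': "k < length ?Q" using kl by simp
    have acb: "adj ?a ?c" using pos_adj[OF xV yV, of "k - 1"] kl k1 by simp
    have aca: "adj ?c ?a" using adj_sym[OF acb] .
    have acb2: "adj ?c ?b" using pos_adj[OF xV yV kl] .
    have ab: "?a \<noteq> ?b" using pp(4) kl by (simp add: nth_eq_iff_index_eq)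
    have cV: "?c \<in> V" and aV: "?a \<in> V" and bV: "?b \<in> V" using pos_facts(1)[OF xV yV] kl by auto
    have dcx: "d ?c x = k" using pos_facts(2)[OF xV yV kl'] d_sym[OF xV cV] by simp
    have dcy: "d ?c y = k" using pos_facts(3)[OF xV yV kl'] k by simp
    have dxa: "d x ?a = k - 1" using pos_facts(2)[OF xV yV, of "k - 1"] kl by simp
    have dby: "d ?b y = k - 1" using pos_facts(3)[OF xV yV kl] k by simp
    have xa: "x \<in> side ?c ?a"
      using pos_take[OF xV yV _ kl', of "k - 1"] path_rev[OF xV cV] xV by simp
    have yb: "y \<in> side ?c ?b" using pos_drop[OF xV yV _ kl, of k] yV by simp
    have cy: "?c \<in> set (P ?a y)" using pos_drop[OF xV yV _ kl', of "k - 1"] by simp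
    have cx: "?c \<in> set (P ?b x)"
      using pos_take[OF xV yV _ kl, of k] path_rev[OF xV bV] by simp
    have fa: "W \<inter> side ?c ?a = {}"
    proof (rule ccontr)
      assume "W \<inter> side ?c ?a \<noteq> {}"
      then obtain w where w: "w \<in> W" "?a \<in> set (P ?c w)" by blast
      have wV: "w \<in> V" using w WV by auto
      have "d w y = d w ?a + 1 + d ?c y" using edge_dist(1)[OF aca wV yV w(2) cy] .
      moreover have "d x w \<le> d x ?a + d ?a w" using triangle[OF xV aV wV] .
      ultimately have "d x w < d y w" using dxa dcy d_sym[OF yV wV] d_sym[OF aV wV] k1 by simp
      then show False using eq w by simp
    qed
    have fb: "W \<inter> side ?c ?b = {}"
    proof (rule ccontr)
      assume "W \<inter> side ?c ?b \<noteq> {}"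
      then obtain w where w: "w \<in> W" "?b \<in> set (P ?c w)" by blast
      have wV: "w \<in> V" using w WV by auto
      have "d w x = d w ?b + 1 + d ?c x" using edge_dist(1)[OF acb2 wV xV w(2) cx] .
      moreover have "d y w \<le> d y ?b + d ?b w" using triangle[OF yV bV wV] .
      ultimately have "d y w < d x w" using dby dcx d_sym[OF xV wV] d_sym[OF bV wV] d_sym[OF bV yV] k1
        by simp
      then show False using eq w by simp
    qed
    show ?thesis
      apply (rule exI[of _ ?c], rule exI[of _ ?a], rule exI[of _ ?b])
      using aca acb2 ab xa yb dcx dcy fa fb by (intro conjI) simp_all
  qed
qed

end

context tr begin

lemma nb2:
  assumes "c \<in> V" "\<not> major V E c" "adj c a" "adj c b" "a \<noteq> b" "adj c q"
  shows "q = a \<or> q = b"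
  using three_nb_major[OF assms(1) assms(3) assms(4) assms(6) assms(5)] assms(2) by blast

lemma branch_terminal:
  assumes a: "adj c a" and mc: "major V E c" and nm: "\<forall>w\<in>side c a. \<not> major V E w"
    and z: "z \<in> side c a" and l: "leaf V E l" and zl: "z \<in> set (P c l)"
  shows "terminal_of V E l c" "l \<in> side c a" "z \<in> leg V E t l \<or> True" "z \<in> leg V E c l"
proof -
  have cV: "c \<in> V" and aV: "a \<in> V" using adj_V a by auto
  have lV: "l \<in> V" using l by (simp add: leaf_def)
  have zV: "z \<in> V" using z by simp
  have "P c l = P c z @ tl (P z l)" using path_split(1)[OF cV lV zl] .
  moreover have "P c z = c # P a z" using side_cons[OF a z] .
  ultimately have "a \<in> set (P c l)" using path_props(7)[OF aV zV] by simp
  then show ls: "l \<in> side c a" using lV by simp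
  show "z \<in> leg V E t l \<or> True" by simp
  have "z \<noteq> c" using z self_not_side[OF a] by blast
  then show "z \<in> leg V E c l" using zl by (simp add: leg_def)
  have ac: "a \<in> set (P c l)" using ls by simp
  have dlc: "d l c = d l a + 1" using edge_dist(1)[OF a lV cV ac] path_props(8)[OF aV cV] d_self[OF cV] by simp
  show "terminal_of V E l c"
    unfolding terminal_of_def
  proof (intro conjI allI impI)
    show "leaf V E l" "major V E c" using l mc by auto
    fix w assume w: "major V E w \<and> w \<noteq> c"
    have wV: "w \<in> V" using w by (simp add: major_def)
    have "w \<notin> side c a" using nm w by blast
    then have "c \<in> set (P a w)" using not_side[OF a wV] by blast
    then have "d l w = d l a + 1 + d c w" using edge_dist(1)[OF a lV wV ac] by blast
    moreover have "d c w \<noteq> 0" using d_zero[OF cV wV] w by auto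
    ultimately show "d l c < d l w" using dlc by simp
  qed
qed

lemma two_distinct:
  assumes "2 \<le> card S"
  shows "\<exists>a b. a \<in> S \<and> b \<in> S \<and> a \<noteq> b"
proof -
  have "S \<noteq> {}" using assms by auto
  then obtain a where a: "a \<in> S" by blast
  have "card (S - {a}) = card S - 1" using card_Diff_singleton[OF a] .
  then have "card (S - {a}) \<noteq> 0" using assms by simp
  then have "S - {a} \<noteq> {}" by force
  then show ?thesis using a by blast
qed

lemma away2:
  assumes mv: "major V E v" and rV: "r \<in> V"
    and hyp: "\<And>p w. adj v p \<Longrightarrow> r \<notin> side v p \<Longrightarrow> w \<in> side v p \<Longrightarrow> \<not> major V E w"
  shows "\<exists>l1 l2. l1 \<noteq> l2 \<and> terminal_of V E l1 v \<and> terminal_of V E l2 v"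
proof -
  have vV: "v \<in> V" using mv by (simp add: major_def)
  let ?X = "{p \<in> N v. r \<in> side v p}"
  have X1: "card ?X \<le> 1"
  proof -
    have "\<forall>p\<in>?X. \<forall>q\<in>?X. p = q" using side_disj adj_sym by blast
    then show ?thesis using card_le_Suc0_iff_eq[of ?X] finN by simp
  qed
  have "3 \<le> card (N v)" using mv by (simp add: major_def deg_N)
  moreover have "card (N v) \<le> card (N v - ?X) + card ?X"
  proof -
    have "card (N v) \<le> card ((N v - ?X) \<union> ?X)" using finN by (intro card_mono) auto
    also have "\<dots> \<le> card (N v - ?X) + card ?X" by (rule card_Un_le)
    finally show ?thesis .
  qed
  ultimately have "2 \<le> card (N v - ?X)" using X1 by linarith
  then obtain p1 p2 where p: "p1 \<in> N v - ?X" "p2 \<in> N v - ?X" "p1 \<noteq> p2" using two_distinct by blast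
  have get: "\<exists>l. terminal_of V E l v \<and> l \<in> side v p" if pp: "p \<in> N v - ?X" for p
  proof -
    have ap: "adj v p" using pp adj_sym by auto
    have pV: "p \<in> V" "v \<noteq> p" using adj_V ap by auto
    obtain l where l: "leaf V E l" "p \<in> set (P v l)" using leaf_ext[OF vV pV] by blast
    have "r \<notin> side v p" using pp rV by auto
    then have nm: "\<forall>w\<in>side v p. \<not> major V E w" using hyp[OF ap] by blast
    have ps: "p \<in> side v p" using path_props(8)[OF vV pV(1)] pV by simp
    show ?thesis using branch_terminal(1,2)[OF ap mv nm ps l] by blast
  qed
  obtain l1 where l1: "terminal_of V E l1 v" "l1 \<in> side v p1" using get[OF p(1)] by blast
  obtain l2 where l2: "terminal_of V E l2 v" "l2 \<in> side v p2" using get[OF p(2)] by blast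
  have "l1 \<noteq> l2"
  proof
    assume "l1 = l2"
    then have "p1 = p2" using side_disj[of v p1 p2 l1] l1 l2 p adj_sym by auto
    then show False using p by simp
  qed
  then show ?thesis using l1 l2 by blast
qed

lemma exists_ext2:
  assumes np: "\<not> is_path_graph V E"
  shows "\<exists>v l1 l2. l1 \<noteq> l2 \<and> terminal_of V E l1 v \<and> terminal_of V E l2 v"
proof -
  obtain r where r: "r \<in> V" "major V E r" using nomajor_path np by blast
  let ?M = "{w \<in> V. major V E w}"
  have fM: "finite ?M" using finV by simp
  obtain v where v: "v \<in> ?M" and vmax: "\<forall>w\<in>?M. d r w \<le> d r v"
    using finite_argmax[OF fM, where f="d r"] r by blast
  have vV: "v \<in> V" and mv: "major V E v" using v by auto
  have hyp: "\<not> major V E w" if ap: "adj v p" and nr: "r \<notin> side v p" and w: "w \<in> side v p" for p w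
  proof
    assume mw: "major V E w"
    have wV: "w \<in> V" using w by simp
    have "v \<in> set (P p r)" using not_side[OF ap r(1) nr] .
    then have "d w r = d w p + 1 + d v r" using edge_dist(1)[OF ap wV r(1)] w by blast
    then have "d r v < d r w" using d_sym[OF r(1) wV] d_sym[OF r(1) vV] by simp
    then show False using vmax wV mw by force
  qed
  have "\<exists>l1 l2. l1 \<noteq> l2 \<and> terminal_of V E l1 v \<and> terminal_of V E l2 v"
    by (rule away2[OF mv r(1)]) (rule hyp)
  then show ?thesis by blast
qed

lemma caseA:
  assumes aca: "adj c a" and acb: "adj c b" and ab: "a \<noteq> b"
    and v: "v \<in> side c a" and mv: "major V E v"
    and vmax: "\<And>w. w \<in> side c a \<union> side c b \<Longrightarrow> major V E w \<Longrightarrow> d c w \<le> d c v"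
  shows "\<exists>l1 l2. l1 \<noteq> l2 \<and> terminal_of V E l1 v \<and> terminal_of V E l2 v"
    "\<And>l. terminal_of V E l v \<Longrightarrow> l \<in> side c a \<union> side c b"
proof -
  have cV: "c \<in> V" and vV: "v \<in> V" using adj_V aca v by auto
  have cv: "c \<noteq> v" using v self_not_side[OF aca] by blast
  have hyp: "\<not> major V E w" if ap: "adj v p" and nr: "c \<notin> side v p" and w: "w \<in> side v p" for p w
  proof
    assume mw: "major V E w"
    have wV: "w \<in> V" using w by simp
    have vp: "v \<in> set (P p c)" using not_side[OF ap cV nr] .
    have pw: "p \<in> set (P v w)" using w by simp
    have dd: "d w c = d w p + 1 + d v c" using edge_dist(1)[OF ap wV cV pw vp] .
    have vw: "v \<in> set (P w c)" using edge_dist(2)[OF ap wV cV pw vp] .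
    then have "v \<in> set (P c w)" using path_rev[OF wV cV] by simp
    then have "P c w = P c v @ tl (P v w)" using path_split(1)[OF cV wV] by blast
    moreover have "P c v = c # P a v" using side_cons[OF aca v] .
    moreover have "a \<in> set (P a v)" using path_props(7) adj_V(2)[OF aca] vV by blast
    ultimately have "w \<in> side c a" using wV by simp
    then have "d c w \<le> d c v" using vmax mw by blast
    then show False using dd d_sym[OF cV wV] d_sym[OF cV vV] by simp
  qed
  show "\<exists>l1 l2. l1 \<noteq> l2 \<and> terminal_of V E l1 v \<and> terminal_of V E l2 v" by (rule away2[OF mv cV]) (rule hyp)
  fix l assume lt: "terminal_of V E l v"
  show "l \<in> side c a \<union> side c b"
  proof (rule ccontr)
    assume nl: "l \<notin> side c a \<union> side c b"
    have lV: "l \<in> V" using term_basic(1)[OF lt] .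
    have "c \<in> set (P a l)" using not_side[OF aca lV] nl by blast
    then have "c \<in> set (P v l)" using edge_dist(2)[OF aca vV lV] v by blast
    then have ncm: "\<not> major V E c" using term_nonmajor[OF lt] cv by blast
    have "2 \<le> degree V E c" using two_nb_deg[OF cV aca acb ab] .
    then have lc: "l \<noteq> c" using term_basic(4)[OF lt] by (auto simp: leaf_def)
    let ?q = "P c l ! 1"
    have q: "adj c ?q" "l \<in> side c ?q" using second[OF cV lV lc[symmetric]] by auto
    have "?q = a \<or> ?q = b" using nb2[OF cV ncm aca acb ab q(1)] .
    then show False using q(2) nl by auto
  qed
qed

lemma caseB_nonmajor:
  assumes aca: "adj c a" and acb: "adj c b" and ab: "a \<noteq> b" and ncm: "\<not> major V E c"
    and nm: "\<forall>w\<in>side c a \<union> side c b. \<not> major V E w"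
  shows "\<forall>w\<in>V. \<not> major V E w"
proof
  fix w assume wV: "w \<in> V"
  have cV: "c \<in> V" using adj_V aca by auto
  show "\<not> major V E w"
  proof (cases "w = c")
    case True then show ?thesis using ncm by simp
  next
    case False
    let ?q = "P c w ! 1"
    have q: "adj c ?q" "w \<in> side c ?q" using second[OF cV wV False[symmetric]] by auto
    have "?q = a \<or> ?q = b" using nb2[OF cV ncm aca acb ab q(1)] .
    then show ?thesis using q(2) nm by auto
  qed
qed

end

locale str = tr +
  fixes \<sigma> :: "'a set \<Rightarrow> int"
  assumes sig: "signature E \<sigma>"
begin

abbreviation "sg u v \<equiv> path_sign \<sigma> (P u v)"
abbreviation "sd u v \<equiv> sdist V E \<sigma> u v"

lemma sg_unit: "u \<in> V \<Longrightarrow> v \<in> V \<Longrightarrow> sg u v = 1 \<or> sg u v = -1"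
  using ps_unit[OF sig _ path_props(6)] by blast

lemma sg_sym: "u \<in> V \<Longrightarrow> v \<in> V \<Longrightarrow> sg v u = sg u v"
  by (simp only: path_rev[of u v] ps_rev)

lemma sd_eq: "sd u v = sg u v * int (d u v)" by (simp add: sdist_def)

lemma sd_split:
  assumes "u \<in> V" "v \<in> V" "w \<in> set (P u v)"
  shows "sd u v = sg u w * sg w v * (int (d u w) + int (d w v))"
proof -
  have wV: "w \<in> V" using assms path_props(5)[OF assms(1,2)] by auto
  have "sg u v = sg u w * sg w v"
    using path_split(1)[OF assms] ps_split[of "P u w" "P w v" \<sigma>]
      path_props(1,2,3)[OF assms(1) wV] path_props(1,2)[OF wV assms(2)] by simp
  moreover have "d u v = d u w + d w v" using path_split(2)[OF assms] .
  ultimately show ?thesis by (simp add: sd_eq)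
qed

abbreviation "terms t \<equiv> {u \<in> V. terminal_of V E u t}"
abbreviation "U \<equiv> {u. \<exists>t. terminal_of V E u t}"
abbreviation "Ext \<equiv> {t. exterior_major V E t}"

lemma finU: "finite U" using finV by (rule rev_finite_subset) (auto simp: terminal_of_def leaf_def)
lemma finExt: "finite Ext"
  using finV by (rule rev_finite_subset) (auto simp: exterior_major_def major_def)
lemma ter_card: "ter V E t = card (terms t)" by (simp add: ter_def)
lemma finterms: "finite (terms t)" using finV by simp

lemma ext_iff: "exterior_major V E t \<longleftrightarrow> major V E t \<and> (\<exists>u. terminal_of V E u t)"
  unfolding exterior_major_def ter_card using finterms
  by (auto simp: card_gt_0_iff terminal_of_def leaf_def)

lemma eta_sub: "eta V E \<sigma> \<subseteq> Ext" by (auto simp: eta_def special_def)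

lemma free_special:
  assumes res: "resolving V sd W" and t1: "terminal_of V E u1 t" and t2: "terminal_of V E u2 t"
    and u12: "u1 \<noteq> u2" and f1: "W \<inter> leg V E t u1 = {}" and f2: "W \<inter> leg V E t u2 = {}"
    and x: "x \<in> leg V E t u1" and y: "y \<in> leg V E t u2" and dd: "d t x = d t y"
  shows "sd t x \<noteq> sd t y"
proof
  assume eqs: "sd t x = sd t y"
  note tb1 = term_basic[OF t1] and tb2 = term_basic[OF t2]
  have xV: "x \<in> V" using x path_props(5)[OF tb1(2,1)] by (auto simp: leg_def)
  have yV: "y \<in> V" using y path_props(5)[OF tb2(2,1)] by (auto simp: leg_def)
  have xt: "x \<noteq> t" using x by (simp add: leg_def)
  have "x \<noteq> y" using legs_disjoint[OF t1 t2 u12] x y by blast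
  then obtain w where w: "w \<in> W" "sd x w \<noteq> sd y w" using res xV yV unfolding resolving_def by blast
  have wV: "w \<in> V" using w res by (auto simp: resolving_def)
  have a1: "adj t (P t u1 ! 1)" and a2: "adj t (P t u2 ! 1)" using term_second t1 t2 by auto
  have xs: "x \<in> side t (P t u1 ! 1)" and ys: "y \<in> side t (P t u2 ! 1)"
    using leg_side t1 t2 x y by auto
  have "w \<notin> side t (P t u1 ! 1)" using f1 w leg_side[OF t1] by auto
  then have "t \<in> set (P (P t u1 ! 1) w)" using not_side[OF a1 wV] by blast
  then have tx: "t \<in> set (P x w)" using edge_dist(2)[OF a1 xV wV _ ] xs by blast
  have "w \<notin> side t (P t u2 ! 1)" using f2 w leg_side[OF t2] by auto
  then have "t \<in> set (P (P t u2 ! 1) w)" using not_side[OF a2 wV] by blast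
  then have ty: "t \<in> set (P y w)" using edge_dist(2)[OF a2 yV wV _ ] ys by blast
  have "d t x \<noteq> 0" using d_zero[OF tb1(2) xV] xt by auto
  then have "sg t x = sg t y" using eqs dd by (simp add: sd_eq)
  then have "sg x t = sg y t" using sg_sym[OF tb1(2) xV] sg_sym[OF tb1(2) yV] by simp
  moreover have "d x t = d y t" using dd d_sym[OF tb1(2) xV] d_sym[OF tb1(2) yV] by simp
  ultimately have "sd x w = sd y w" using sd_split[OF xV wV tx] sd_split[OF yV wV ty] by simp
  then show False using w by simp
qed

lemma LB:
  assumes res: "resolving V sd W"
  shows "card U \<le> card W + card Ext + card (eta V E \<sigma>)"
proof -
  have WV: "W \<subseteq> V" using res by (simp add: resolving_def)
  have finW: "finite W" using WV finV by (rule finite_subset)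
  let ?F = "{u. \<exists>t. terminal_of V E u t \<and> W \<inter> leg V E t u = {}}"
  have FU: "?F \<subseteq> U" by blast
  have finF: "finite ?F" using finU FU by (rule rev_finite_subset)
  let ?g = "\<lambda>u. SOME w. w \<in> W \<and> (\<exists>t. terminal_of V E u t \<and> w \<in> leg V E t u)"
  have gprop: "?g u \<in> W \<and> (\<exists>t. terminal_of V E u t \<and> ?g u \<in> leg V E t u)" if "u \<in> U - ?F" for u
  proof -
    from that obtain t where t: "terminal_of V E u t" "W \<inter> leg V E t u \<noteq> {}" by blast
    then have "\<exists>w. w \<in> W \<and> (\<exists>t. terminal_of V E u t \<and> w \<in> leg V E t u)" by blast
    then show ?thesis by (rule someI_ex)
  qed
  have inj: "inj_on ?g (U - ?F)"
  proof (rule inj_onI)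
    fix u u' assume u: "u \<in> U - ?F" and u': "u' \<in> U - ?F" and eq: "?g u = ?g u'"
    obtain t where t: "terminal_of V E u t" "?g u \<in> leg V E t u" using gprop[OF u] by blast
    obtain t' where t': "terminal_of V E u' t'" "?g u' \<in> leg V E t' u'" using gprop[OF u'] by blast
    show "u = u'"
    proof (rule ccontr)
      assume "u \<noteq> u'"
      then have "leg V E t u \<inter> leg V E t' u' = {}" by (rule legs_disjoint[OF t(1) t'(1)])
      moreover have "?g u \<in> leg V E t u \<inter> leg V E t' u'" using t(2) t'(2) eq by simp
      ultimately show False by simp
    qed
  qed
  have "?g ` (U - ?F) \<subseteq> W"
  proof (rule image_subsetI)
    fix u assume "u \<in> U - ?F"
    from gprop[OF this] show "?g u \<in> W" by (rule conjunct1)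
  qed
  then have c1: "card (U - ?F) \<le> card W" by (rule card_inj_on_le[OF inj _ finW])
  have c2: "card U \<le> card (U - ?F) + card ?F"
  proof -
    have "U \<subseteq> (U - ?F) \<union> ?F" by blast
    then have "card U \<le> card ((U - ?F) \<union> ?F)" using finU finF by (intro card_mono) auto
    also have "\<dots> \<le> card (U - ?F) + card ?F" by (rule card_Un_le)
    finally show ?thesis .
  qed
  have bound: "card (?F \<inter> terms t) \<le> (if t \<in> eta V E \<sigma> then 2 else 1)" if tE: "t \<in> Ext" for t
  proof -
    have fin: "finite (?F \<inter> terms t)" using finterms by simp
    have freeleg: "W \<inter> leg V E t u = {}" if "u \<in> ?F \<inter> terms t" for u
    proof -
      from that obtain t' where "terminal_of V E u t'" "W \<inter> leg V E t' u = {}" by blast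
      moreover have "t' = t" using term_unique that calculation(1) by blast
      ultimately show ?thesis by simp
    qed
    have tt: "terminal_of V E u t" if "u \<in> ?F \<inter> terms t" for u using that by simp
    show ?thesis
    proof (cases "t \<in> eta V E \<sigma>")
      case False
      have "\<forall>a\<in>?F \<inter> terms t. \<forall>b\<in>?F \<inter> terms t. a = b"
      proof (intro ballI, rule ccontr)
        fix a b assume a: "a \<in> ?F \<inter> terms t" and b: "b \<in> ?F \<inter> terms t" and ab: "a \<noteq> b"
        have fs: "\<forall>i x y. x \<in> leg V E t a \<and> y \<in> leg V E t b \<and> d t x = i \<and> d t y = i \<longrightarrow> sd t x \<noteq> sd t y"
          using free_special[OF res tt[OF a] tt[OF b] ab freeleg[OF a] freeleg[OF b]] by auto
        have "special V E \<sigma> t" unfolding special_def using tE ab tt[OF a] tt[OF b] fs by blast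
        then have "t \<in> eta V E \<sigma>" using term_basic(2) tt[OF a] by (simp add: eta_def)
        then show False using False by simp
      qed
      then show ?thesis using card_le_Suc0_iff_eq[OF fin] False by simp
    next
      case True
      have "card (?F \<inter> terms t) \<le> 2"
      proof (rule ccontr)
        assume "\<not> card (?F \<inter> terms t) \<le> 2"
        then obtain a b c where abc: "a \<in> ?F \<inter> terms t" "b \<in> ?F \<inter> terms t" "c \<in> ?F \<inter> terms t"
          "a \<noteq> b" "a \<noteq> c" "b \<noteq> c" using three_distinct by blast
        have tV: "t \<in> V" using term_basic(2) tt[OF abc(1)] .
        have val: "sd t (P t u ! 1) = 1 \<or> sd t (P t u ! 1) = -1" if "u \<in> ?F \<inter> terms t" for u
          using term_second[OF tt[OF that]] sg_unit[OF tV] by (auto simp: sd_eq)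
        have ne: "sd t (P t u ! 1) \<noteq> sd t (P t u' ! 1)"
          if "u \<in> ?F \<inter> terms t" "u' \<in> ?F \<inter> terms t" "u \<noteq> u'" for u u'
          using free_special[OF res tt[OF that(1)] tt[OF that(2)] that(3) freeleg[OF that(1)]
              freeleg[OF that(2)]] term_second[OF tt[OF that(1)]] term_second[OF tt[OF that(2)]]
          by auto
        show False using val[OF abc(1)] val[OF abc(2)] val[OF abc(3)]
            ne[OF abc(1,2,4)] ne[OF abc(1,3,5)] ne[OF abc(2,3,6)] by linarith
      qed
      then show ?thesis using True by simp
    qed
  qed
  have "?F \<subseteq> (\<Union>t\<in>Ext. ?F \<inter> terms t)"
  proof
    fix u assume u: "u \<in> ?F"
    then obtain t where t: "terminal_of V E u t" by blast
    then have "t \<in> Ext" using ext_iff term_basic(5) by blast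
    then show "u \<in> (\<Union>t\<in>Ext. ?F \<inter> terms t)" using u t term_basic(1)[OF t] by blast
  qed
  then have "card ?F \<le> card (\<Union>t\<in>Ext. ?F \<inter> terms t)"
    using finExt finterms by (intro card_mono) auto
  also have "\<dots> \<le> (\<Sum>t\<in>Ext. card (?F \<inter> terms t))" using card_UN_le[OF finExt] .
  also have "\<dots> \<le> (\<Sum>t\<in>Ext. if t \<in> eta V E \<sigma> then 2 else 1)" using bound by (intro sum_mono) auto
  also have "\<dots> = card Ext + card (eta V E \<sigma>)" using sum_12[OF finExt eta_sub] .
  finally have "card ?F \<le> card Ext + card (eta V E \<sigma>)" .
  then show ?thesis using c1 c2 by linarith
qed

definition spec_prop :: "'a \<Rightarrow> 'a \<Rightarrow> 'a \<Rightarrow> bool" where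
  "spec_prop t n m \<longleftrightarrow> n \<noteq> m \<and> terminal_of V E n t \<and> terminal_of V E m t \<and>
     (\<forall>i x y. x \<in> leg V E t n \<and> y \<in> leg V E t m \<and> d t x = i \<and> d t y = i \<longrightarrow> sd t x \<noteq> sd t y)"

definition pr :: "'a \<Rightarrow> 'a \<times> 'a" where
  "pr t = (SOME q. spec_prop t (fst q) (snd q))"

definition Om :: "'a \<Rightarrow> 'a set" where
  "Om t = (if special V E \<sigma> t then {fst (pr t), snd (pr t)} else {SOME u. terminal_of V E u t})"

definition Wc :: "'a set" where
  "Wc = U - (\<Union>t\<in>Ext. Om t)"

lemma special_iff: "special V E \<sigma> t \<longleftrightarrow> exterior_major V E t \<and> (\<exists>n m. spec_prop t n m)"
  unfolding special_def spec_prop_def by blast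

lemma pr_prop: assumes "special V E \<sigma> t" shows "spec_prop t (fst (pr t)) (snd (pr t))"
proof -
  obtain n m where "spec_prop t n m" using assms special_iff by blast
  then have "\<exists>q. spec_prop t (fst q) (snd q)" by (intro exI[of _ "(n,m)"]) simp
  then show ?thesis unfolding pr_def by (rule someI_ex)
qed

lemma Om_props:
  assumes tE: "t \<in> Ext"
  shows "Om t \<subseteq> terms t \<and> card (Om t) = (if t \<in> eta V E \<sigma> then 2 else 1)"
proof -
  have tV: "t \<in> V" using tE by (simp add: exterior_major_def major_def)
  show ?thesis
  proof (cases "special V E \<sigma> t")
    case True
    have sp: "spec_prop t (fst (pr t)) (snd (pr t))" using pr_prop[OF True] .
    then have "Om t \<subseteq> terms t" using term_basic(1) by (auto simp: Om_def True spec_prop_def)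
    moreover have "card (Om t) = 2" using sp by (simp add: Om_def True spec_prop_def)
    ultimately show ?thesis using True tV by (simp add: eta_def)
  next
    case False
    have "\<exists>u. terminal_of V E u t" using tE ext_iff by blast
    then have "terminal_of V E (SOME u. terminal_of V E u t) t" by (rule someI_ex)
    then have "Om t \<subseteq> terms t" using term_basic(1) by (auto simp: Om_def False)
    moreover have "card (Om t) = 1" by (simp add: Om_def False)
    ultimately show ?thesis using False by (simp add: eta_def)
  qed
qed

lemma Om_disj:
  assumes "t \<in> Ext" "t' \<in> Ext" "t \<noteq> t'"
  shows "Om t \<inter> Om t' = {}"
proof -
  have "Om t \<subseteq> terms t" "Om t' \<subseteq> terms t'" using Om_props assms by auto
  moreover have "terms t \<inter> terms t' = {}" using term_unique assms(3) by blast
  ultimately show ?thesis by blast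
qed

lemma Wc_V: "Wc \<subseteq> V" unfolding Wc_def by (auto simp: terminal_of_def leaf_def)

lemma card_Wc: "card Wc + card Ext + card (eta V E \<sigma>) = card U"
proof -
  let ?O = "\<Union>t\<in>Ext. Om t"
  have OU: "?O \<subseteq> U"
  proof
    fix u assume "u \<in> ?O"
    then obtain t where t: "t \<in> Ext" "u \<in> Om t" by blast
    then have "u \<in> terms t" using Om_props[OF t(1)] by blast
    then show "u \<in> U" by blast
  qed
  have finOm: "\<forall>t\<in>Ext. finite (Om t)"
  proof
    fix t assume "t \<in> Ext"
    then have "Om t \<subseteq> terms t" using Om_props by blast
    then show "finite (Om t)" using finterms by (rule rev_finite_subset[rotated])
  qed
  have disj: "\<forall>t\<in>Ext. \<forall>t'\<in>Ext. t \<noteq> t' \<longrightarrow> Om t \<inter> Om t' = {}" using Om_disj by blast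
  have finO: "finite ?O" using finU OU by (rule rev_finite_subset)
  have "card ?O = (\<Sum>t\<in>Ext. card (Om t))"
    by (rule card_UN_disjoint[OF finExt finOm disj])
  also have "\<dots> = (\<Sum>t\<in>Ext. if t \<in> eta V E \<sigma> then 2 else 1)"
  proof (rule sum.cong)
    fix t assume "t \<in> Ext"
    then show "card (Om t) = (if t \<in> eta V E \<sigma> then 2 else 1)" using Om_props by blast
  qed simp
  also have "\<dots> = card Ext + card (eta V E \<sigma>)" using sum_12[OF finExt eta_sub] .
  finally have cO: "card ?O = card Ext + card (eta V E \<sigma>)" .
  have "card Wc = card U - card ?O" unfolding Wc_def using card_Diff_subset[OF finO OU] .
  moreover have "card ?O \<le> card U" using card_mono[OF finU OU] .
  ultimately show ?thesis using cO by simp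
qed

lemma W_mem:
  assumes "t \<in> Ext" "terminal_of V E u t"
  shows "u \<in> Wc \<longleftrightarrow> u \<notin> Om t"
proof -
  have h: "t' = t" if "t' \<in> Ext" "u \<in> Om t'" for t'
  proof -
    have "u \<in> terms t'" using Om_props[OF that(1)] that(2) by blast
    then have "terminal_of V E u t'" by simp
    then show ?thesis using term_unique[OF assms(2)] by metis
  qed
  have uU: "u \<in> U" using assms(2) by blast
  show ?thesis
  proof
    assume "u \<in> Wc"
    then show "u \<notin> Om t" unfolding Wc_def using assms(1) by blast
  next
    assume "u \<notin> Om t"
    then have "u \<notin> (\<Union>t\<in>Ext. Om t)" using h by blast
    then show "u \<in> Wc" unfolding Wc_def using uU by blast
  qed
qed

lemma W2:
  assumes H: "\<forall>t\<in>eta V E \<sigma>. ter V E t \<noteq> 2" and tE: "t \<in> Ext"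
    and u1: "terminal_of V E u1 t" and u2: "terminal_of V E u2 t" and u12: "u1 \<noteq> u2"
  shows "\<exists>u. terminal_of V E u t \<and> u \<in> Wc"
proof -
  have "{u1,u2} \<subseteq> terms t" using u1 u2 term_basic by auto
  then have "card {u1,u2} \<le> card (terms t)" by (rule card_mono[OF finterms])
  then have c2: "2 \<le> card (terms t)" using u12 by simp
  have lt: "card (Om t) < card (terms t)"
  proof (cases "t \<in> eta V E \<sigma>")
    case True
    then have "card (terms t) \<noteq> 2" using H ter_card by simp
    then show ?thesis using True Om_props[OF tE] c2 by simp
  next
    case False
    then show ?thesis using Om_props[OF tE] c2 by simp
  qed
  have "\<not> terms t \<subseteq> Om t"
  proof
    assume "terms t \<subseteq> Om t"
    moreover have "finite (Om t)" using Om_props[OF tE] finterms by (blast intro: rev_finite_subset)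
    ultimately have "card (terms t) \<le> card (Om t)" by (intro card_mono)
    then show False using lt by simp
  qed
  then obtain u where u: "terminal_of V E u t" "u \<notin> Om t" by blast
  then show ?thesis using W_mem[OF tE u(1)] by blast
qed

lemma sd_abs: "u \<in> V \<Longrightarrow> v \<in> V \<Longrightarrow> \<bar>sd u v\<bar> = int (d u v)"
  using sg_unit[of u v] by (auto simp: sd_eq abs_mult)

lemma UB_res:
  assumes NP: "\<not> is_path_graph V E" and H: "\<forall>t\<in>eta V E \<sigma>. ter V E t \<noteq> 2"
  shows "resolving V sd Wc"
  unfolding resolving_def
proof (intro conjI ballI impI)
  show WV: "Wc \<subseteq> V" by (rule Wc_V)
  fix x y assume xV: "x \<in> V" and yV: "y \<in> V" and xy: "x \<noteq> y"
  show "\<exists>w\<in>Wc. sd x w \<noteq> sd y w"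
  proof (rule ccontr)
    assume "\<not> (\<exists>w\<in>Wc. sd x w \<noteq> sd y w)"
    then have eqs: "\<forall>w\<in>Wc. sd x w = sd y w" by blast
    have eqd: "\<forall>w\<in>Wc. d x w = d y w"
    proof
      fix w assume w: "w \<in> Wc"
      then have wV: "w \<in> V" using WV by blast
      have "\<bar>sd x w\<bar> = \<bar>sd y w\<bar>" using eqs w by simp
      then show "d x w = d y w" using sd_abs[OF xV wV] sd_abs[OF yV wV] by simp
    qed
    have Wne: "Wc \<noteq> {}"
    proof -
      obtain v l1 l2 where v: "l1 \<noteq> l2" "terminal_of V E l1 v" "terminal_of V E l2 v"
        using exists_ext2[OF NP] by blast
      have "v \<in> Ext" using ext_iff term_basic(5)[OF v(2)] v(2) by blast
      then show ?thesis using W2[OF H _ v(2) v(3) v(1)] by blast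
    qed
    obtain c a b where cab: "adj c a" "adj c b" "a \<noteq> b" "x \<in> side c a" "y \<in> side c b"
      "d c x = d c y" "Wc \<inter> side c a = {}" "Wc \<inter> side c b = {}"
      using midpoint[OF xV yV xy WV Wne eqd] by blast
    have cV: "c \<in> V" using adj_V cab(1) by auto
    let ?S = "side c a \<union> side c b"
    show False
    proof (cases "\<exists>w\<in>?S. major V E w")
      case True
      let ?M = "{w \<in> ?S. major V E w}"
      have fM: "finite ?M" using finV by (rule rev_finite_subset) auto
      obtain w0 where "w0 \<in> ?M" using True by blast
      then obtain v where v: "v \<in> ?M" and vmax: "\<forall>w\<in>?M. d c w \<le> d c v"
        using finite_argmax[OF fM, where f="d c"] by blast
      have vmax': "\<And>w. w \<in> ?S \<Longrightarrow> major V E w \<Longrightarrow> d c w \<le> d c v" using vmax by blast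
      have mv: "major V E v" using v by blast
      have res: "(\<exists>l1 l2. l1 \<noteq> l2 \<and> terminal_of V E l1 v \<and> terminal_of V E l2 v) \<and>
                 (\<forall>l. terminal_of V E l v \<longrightarrow> l \<in> ?S)"
      proof (cases "v \<in> side c a")
        case True
        show ?thesis using caseA[OF cab(1) cab(2) cab(3) True mv vmax'] by blast
      next
        case False
        then have vb: "v \<in> side c b" using v by blast
        have vmax'': "\<And>w. w \<in> side c b \<union> side c a \<Longrightarrow> major V E w \<Longrightarrow> d c w \<le> d c v"
          using vmax' by blast
        show ?thesis using caseA[OF cab(2) cab(1) cab(3)[symmetric] vb mv vmax''] by blast
      qed
      then obtain l1 l2 where l: "l1 \<noteq> l2" "terminal_of V E l1 v" "terminal_of V E l2 v" by blast
      have "v \<in> Ext" using ext_iff mv l(2) by blast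
      then obtain l where "terminal_of V E l v" "l \<in> Wc" using W2[OF H _ l(2) l(3) l(1)] by blast
      then have "l \<in> ?S" "l \<in> Wc" using res by auto
      then show False using cab(7,8) by blast
    next
      case False
      then have nm: "\<forall>w\<in>?S. \<not> major V E w" by blast
      show False
      proof (cases "major V E c")
        case False
        then have "\<forall>w\<in>V. \<not> major V E w" using caseB_nonmajor[OF cab(1,2,3) False nm] by blast
        then show False using nomajor_path NP by blast
      next
        case mc: True
        have xc: "c \<noteq> x" using cab(4) self_not_side[OF cab(1)] by blast
        have yc: "c \<noteq> y" using cab(5) self_not_side[OF cab(2)] by blast
        have nma: "\<forall>w\<in>side c a. \<not> major V E w" using nm by blast
        have nmb: "\<forall>w\<in>side c b. \<not> major V E w" using nm by blast
        obtain la where la: "leaf V E la" "x \<in> set (P c la)" using leaf_ext[OF cV xV xc] by blast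
        obtain lb where lb: "leaf V E lb" "y \<in> set (P c lb)" using leaf_ext[OF cV yV yc] by blast
        note ba = branch_terminal[OF cab(1) mc nma cab(4) la]
        note bb = branch_terminal[OF cab(2) mc nmb cab(5) lb]
        have lab: "la \<noteq> lb"
        proof
          assume "la = lb"
          then have "a = b" using side_disj[OF cab(1) cab(2)] ba(2) bb(2) by blast
          then show False using cab(3) by simp
        qed
        have cE: "c \<in> Ext" using ext_iff mc ba(1) by blast
        have "la \<notin> Wc" using cab(7) ba(2) by blast
        then have laO: "la \<in> Om c" using W_mem[OF cE ba(1)] by blast
        have "lb \<notin> Wc" using cab(8) bb(2) by blast
        then have lbO: "lb \<in> Om c" using W_mem[OF cE bb(1)] by blast
        have spc: "special V E \<sigma> c"
        proof (rule ccontr)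
          assume "\<not> special V E \<sigma> c"
          then have "Om c = {SOME u. terminal_of V E u c}" by (simp add: Om_def)
          then show False using laO lbO lab by simp
        qed
        have Oc: "Om c = {fst (pr c), snd (pr c)}" using spc by (simp add: Om_def)
        have sp: "spec_prop c (fst (pr c)) (snd (pr c))" using pr_prop[OF spc] .
        obtain l3 where l3: "terminal_of V E l3 c" "l3 \<in> Wc" using W2[OF H cE ba(1) bb(1) lab] by blast
        have l3V: "l3 \<in> V" using term_basic(1)[OF l3(1)] .
        have "l3 \<notin> side c a" using l3(2) cab(7) by blast
        then have "c \<in> set (P a l3)" using not_side[OF cab(1) l3V] by blast
        then have cx: "c \<in> set (P x l3)" using edge_dist(2)[OF cab(1) xV l3V] cab(4) by blast
        have "l3 \<notin> side c b" using l3(2) cab(8) by blast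
        then have "c \<in> set (P b l3)" using not_side[OF cab(2) l3V] by blast
        then have cy: "c \<in> set (P y l3)" using edge_dist(2)[OF cab(2) yV l3V] cab(5) by blast
        have e: "sd x l3 = sd y l3" using eqs l3(2) by blast
        have dxc: "d x c = d y c" using cab(6) d_sym[OF cV xV] d_sym[OF cV yV] by simp
        let ?s = "sg c l3" and ?D = "int (d y c) + int (d c l3)"
        have "sg x c * ?s * ?D = sg y c * ?s * ?D"
          using e sd_split[OF xV l3V cx] sd_split[OF yV l3V cy] dxc by simp
        moreover have "?s \<noteq> 0" using sg_unit[OF cV l3V] by auto
        moreover have "?D \<noteq> 0" using d_zero[OF yV cV] yc by auto
        ultimately have "sg x c = sg y c" by simp
        then have sdeq: "sd c x = sd c y"
          using sg_sym[OF cV xV] sg_sym[OF cV yV] cab(6) by (simp add: sd_eq)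
        have xl: "x \<in> leg V E c la" and yl: "y \<in> leg V E c lb" using ba(4) bb(4) by auto
        have "(fst (pr c) = la \<and> snd (pr c) = lb) \<or> (fst (pr c) = lb \<and> snd (pr c) = la)"
          using laO lbO Oc lab by auto
        then show False
        proof
          assume h: "fst (pr c) = la \<and> snd (pr c) = lb"
          then show False using sp xl yl cab(6) sdeq unfolding spec_prop_def by auto
        next
          assume h: "fst (pr c) = lb \<and> snd (pr c) = la"
          have "\<forall>i x' y'. x' \<in> leg V E c lb \<and> y' \<in> leg V E c la \<and> d c x' = i \<and> d c y' = i \<longrightarrow> sd c x' \<noteq> sd c y'"
            using sp h unfolding spec_prop_def by simp
          then have "sd c y \<noteq> sd c x" using xl yl cab(6) by blast
          then show False using sdeq by simp
        qed
      qed
    qed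
  qed
qed

lemma dim_formula:
  assumes NP: "\<not> is_path_graph V E" and H: "\<forall>t\<in>eta V E \<sigma>. ter V E t \<noteq> 2"
  shows "int (metric_dim V sd) = int (card U) - int (card Ext) - int (card (eta V E \<sigma>))"
proof -
  let ?A = "{card W | W. resolving V sd W}"
  have fin: "finite ?A"
  proof (rule finite_subset)
    show "?A \<subseteq> {0..card V}"
      using card_mono[OF finV] by (auto simp: resolving_def)
  qed simp
  have mem: "card Wc \<in> ?A" using UB_res[OF NP H] by blast
  have low: "\<forall>k\<in>?A. card Wc \<le> k"
  proof
    fix k assume "k \<in> ?A"
    then obtain W where W: "k = card W" "resolving V sd W" by blast
    show "card Wc \<le> k" using LB[OF W(2)] card_Wc W(1) by simp
  qed
  have "metric_dim V sd = card Wc" unfolding metric_dim_def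
    using fin mem low by (intro Min_eqI) auto
  then show ?thesis using card_Wc by simp
qed

end

lemma ps_one: "path_sign (\<lambda>_. 1) xs = 1"
proof -
  have "map (\<lambda>i. (\<lambda>_. 1::int) {xs ! i, xs ! Suc i}) [0..<length xs - 1] = replicate (length xs - 1) 1"
    by (simp add: map_replicate_const)
  then show ?thesis by (simp add: path_sign_def)
qed

theorem theorem4p3:
  fixes V :: "'a set" and E :: "'a set set" and \<sigma> :: "'a set \<Rightarrow> int"
  assumes "tree V E"
    and "signature E \<sigma>"
    and "\<not> is_path_graph V E"
    and "\<forall>t \<in> eta V E \<sigma>. ter V E t \<noteq> 2"
  shows "int (dim_signed V E \<sigma>) = int (dim_tree V E) - int (card (eta V E \<sigma>))"
proof -
  interpret s: str V E \<sigma> using assms(1,2) by (unfold_locales) auto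
  have sig1: "signature E (\<lambda>_. 1)" by (simp add: signature_def)
  interpret s1: str V E "\<lambda>_. 1" using assms(1) sig1 by (unfold_locales) auto
  have sd1: "sdist V E (\<lambda>_. 1) = (\<lambda>u v. int (tdist V E u v))"
    by (intro ext) (simp add: sdist_def ps_one)
  have eta1: "eta V E (\<lambda>_. 1) = {}"
  proof (rule ccontr)
    assume "eta V E (\<lambda>_. 1) \<noteq> {}"
    then obtain t where t: "special V E (\<lambda>_. 1) t" by (auto simp: eta_def)
    then obtain n m where nm: "terminal_of V E n t" "terminal_of V E m t"
      "\<forall>i x y. x \<in> leg V E t n \<and> y \<in> leg V E t m \<and> tdist V E t x = i \<and> tdist V E t y = i \<longrightarrow>
          sdist V E (\<lambda>_. 1) t x \<noteq> sdist V E (\<lambda>_. 1) t y"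
      unfolding special_def by blast
    note a = s.term_second[OF nm(1)] and b = s.term_second[OF nm(2)]
    have "sdist V E (\<lambda>_. 1) t (tpath V E t n ! 1) \<noteq> sdist V E (\<lambda>_. 1) t (tpath V E t m ! 1)"
      using nm(3) a(2,3) b(2,3) by blast
    then show False using a(3) b(3) by (simp add: sd1)
  qed
  have "int (dim_signed V E \<sigma>) = int (card s.U) - int (card s.Ext) - int (card (eta V E \<sigma>))"
    unfolding dim_signed_def using s.dim_formula[OF assms(3,4)] .
  moreover have "int (dim_tree V E) = int (card s.U) - int (card s.Ext)"
  proof -
    have "int (metric_dim V (sdist V E (\<lambda>_. 1))) = int (card s.U) - int (card s.Ext) - int (card (eta V E (\<lambda>_. 1)))"
      using s1.dim_formula[OF assms(3)] eta1 by simp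
    then show ?thesis unfolding dim_tree_def sd1 eta1 by simp
  qed
  ultimately show ?thesis by simp
qed

end
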